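(* Let $n\ge 1$, $r\ge 1$, $0\le p_0,\ldots,p_{r-1}\le n-1$, and put $p_r=-1$. The LOG group of $\Gamma(n;a_{n-p_0}a_{n-p_1}\cdots a_{n-p_{r-1}})$ has the presentation \[\Big\langle a,c\ \Big|\ \Big(\prod_{i=0}^{r-1}ac^{p_{i+1}-p_i}\Big)^{-1}c\Big(\prod_{i=0}^{r-1}ac^{p_{i+1}-p_i}\Big)a^{-1},\ [a,c^n]\Big\rangle\] and is isomorphic to the natural HNN extension $\widehat{G}_n(w)$ of the cyclically presented group $G_n(w)$ with \[w=(x_{p_0}x_{p_1+1}\cdots x_{p_{r-1}+(r-1)}x_{p_r+r})(x_{p_0+1}x_{p_1+2}\cdots x_{p_{r-1}+r})^{-1}\] (subscripts mod $n$).
   Context: The LOG $\Gamma(n;v)$ for a word $v=a_{n-p_0}^{\delta_0}\cdots a_{n-p_{r-1}}^{\delta_{r-1}}$ (here all $\delta_j=1$) has LOG presentation \[\langle a_1,\ldots,a_n,t_0,\ldots,t_{r-1}\mid a_{i+1}=t_0^{-1}a_it_0\ (1\le i\le n,\ a_{n+1}=a_1),\ t_{j+1}=a_{n-p_j}^{-\delta_j}t_j a_{n-p_j}^{\delta_j}\ (0\le j\le r-1,\ t_r=a_1)\rangle;\] the group it defines is the LOG group. For $w\in F_n=F(x_1,\ldots,x_n)$, $G_n(w)=\langle x_1,\ldots,x_n\mid w,\theta(w),\ldots,\theta^{n-1}(w)\rangle$ where $\theta(x_i)=x_{i+1}$ (subscripts mod $n$), and the natural HNN extension is $\widehat{G}_n(w)=G_n(w)\rtimes_\phi\mathbb{Z}$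 where $\phi$ is the automorphism induced by $\theta$. *)

theory Defs
  imports "HOL-Algebra.Group"
begin

text \<open>A word over generators of type 'a is a list of letters (x, True) = x and
  (x, False) = x^-1.\<close>

type_synonym 'a word = "('a \<times> bool) list"

definition words :: "'a set \<Rightarrow> 'a word set" where
  "words X = {w. set w \<subseteq> X \<times> UNIV}"

definition winv :: "'a word \<Rightarrow> 'a word" where
  "winv w = rev (map (\<lambda>(x, b). (x, \<not> b)) w)"

definition gen :: "'a \<Rightarrow> 'a word" where
  "gen x = [(x, True)]"

definition genpow :: "'a \<Rightarrow> int \<Rightarrow> 'a word" where
  "genpow x k = (if 0 \<le> k then replicate (nat k) (x, True) else replicate (nat (- k)) (x, False))"

definition releq :: "'a word \<Rightarrow> 'a word \<Rightarrow> 'a word" where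
  "releq l r = l @ winv r"

inductive_set pres_rel :: "'a set \<Rightarrow> 'a word set \<Rightarrow> ('a word \<times> 'a word) set"
  for X R where
  prefl: "w \<in> words X \<Longrightarrow> (w, w) \<in> pres_rel X R"
| psym: "(u, v) \<in> pres_rel X R \<Longrightarrow> (v, u) \<in> pres_rel X R"
| ptrans: "(u, v) \<in> pres_rel X R \<Longrightarrow> (v, w) \<in> pres_rel X R \<Longrightarrow> (u, w) \<in> pres_rel X R"
| pfree: "u \<in> words X \<Longrightarrow> v \<in> words X \<Longrightarrow> x \<in> X \<Longrightarrow>
     (u @ [(x, b), (x, \<not> b)] @ v, u @ v) \<in> pres_rel X R"
| prel: "u \<in> words X \<Longrightarrow> v \<in> words X \<Longrightarrow> r \<in> R \<Longrightarrow> r \<in> words X \<Longrightarrow>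
     (u @ r @ v, u @ v) \<in> pres_rel X R"

definition pres_group :: "'a set \<Rightarrow> 'a word set \<Rightarrow> 'a word set monoid" where
  "pres_group X R =
     \<lparr> carrier = words X // pres_rel X R,
       mult = (\<lambda>A B. \<Union>a\<in>A. \<Union>b\<in>B. pres_rel X R `` {a @ b}),
       one = pres_rel X R `` {[]} \<rparr>"

section \<open>The LOG group of Gamma(n; a_{n-p_0} ... a_{n-p_{r-1}}) (all delta_j = 1)\<close>

text \<open>Generators: Inl i is a_i (1 <= i <= n), Inr j is t_j (0 <= j <= r-1).
  The word v is given by the list ps = [p_0, ..., p_{r-1}].\<close>

definition LOG_gens :: "nat \<Rightarrow> nat list \<Rightarrow> (nat + nat) set" where
  "LOG_gens n ps = Inl ` {1..n} \<union> Inr ` {..<length ps}"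

definition LOG_a :: "nat \<Rightarrow> nat \<Rightarrow> (nat + nat) word" where
  "LOG_a n i = gen (Inl (if i = n + 1 then 1 else i))"   \<comment> \<open>a_{n+1} = a_1\<close>

definition LOG_t :: "nat list \<Rightarrow> nat \<Rightarrow> (nat + nat) word" where
  "LOG_t ps j = (if j = length ps then gen (Inl 1) else gen (Inr j))"  \<comment> \<open>t_r = a_1\<close>

definition LOG_rels :: "nat \<Rightarrow> nat list \<Rightarrow> (nat + nat) word set" where
  "LOG_rels n ps =
     {releq (LOG_a n (i + 1)) (winv (LOG_t ps 0) @ LOG_a n i @ LOG_t ps 0) | i. 1 \<le> i \<and> i \<le> n}
   \<union> {releq (LOG_t ps (j + 1))
        (winv (LOG_a n (n - ps ! j)) @ LOG_t ps j @ LOG_a n (n - ps ! j)) | j. j < length ps}"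

definition LOG_group :: "nat \<Rightarrow> nat list \<Rightarrow> (nat + nat) word set monoid" where
  "LOG_group n ps = pres_group (LOG_gens n ps) (LOG_rels n ps)"

datatype gac = GA | GC

definition pext :: "nat list \<Rightarrow> nat \<Rightarrow> int" where
  "pext ps i = (if i < length ps then int (ps ! i) else -1)"

definition AC_U :: "nat list \<Rightarrow> gac word" where
  "AC_U ps = concat (map (\<lambda>i. gen GA @ genpow GC (pext ps (i + 1) - pext ps i)) [0..<length ps])"

definition AC_rels :: "nat \<Rightarrow> nat list \<Rightarrow> gac word set" where
  "AC_rels n ps =
     { winv (AC_U ps) @ gen GC @ AC_U ps @ winv (gen GA),
       winv (gen GA) @ genpow GC (- int n) @ gen GA @ genpow GC (int n) }"

definition AC_group :: "nat \<Rightarrow> nat list \<Rightarrow> gac word set monoid" where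
  "AC_group n ps = pres_group UNIV (AC_rels n ps)"

text \<open>Generators x_0, ..., x_{n-1} (subscripts mod n, so x_n = x_0).
  shift n k realises theta^k (k an integer).\<close>
definition shift :: "nat \<Rightarrow> int \<Rightarrow> nat word \<Rightarrow> nat word" where
  "shift n k w = map (\<lambda>(x, b). (nat ((int x + k) mod int n), b)) w"

definition cyc_rels :: "nat \<Rightarrow> nat word \<Rightarrow> nat word set" where
  "cyc_rels n w = {shift n (int k) w | k. k < n}"

definition cyc_group :: "nat \<Rightarrow> nat word \<Rightarrow> nat word set monoid" where
  "cyc_group n w = pres_group {..<n} (cyc_rels n w)"

text \<open>The automorphism phi^k of G_n(w) induced by theta^k (acting on classes).\<close>
definition cyc_phi :: "nat \<Rightarrow> nat word \<Rightarrow> int \<Rightarrow> nat word set \<Rightarrow> nat word set" where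
  "cyc_phi n w k A = (\<Union>u\<in>A. pres_rel {..<n} (cyc_rels n w) `` {shift n k u})"

text \<open>Natural HNN extension G_n(w) \<rtimes>_phi Z: pairs (g, m) with
  (g, m)(h, k) = (g phi^m(h), m + k).\<close>
definition cyc_hnn :: "nat \<Rightarrow> nat word \<Rightarrow> (nat word set \<times> int) monoid" where
  "cyc_hnn n w =
     \<lparr> carrier = carrier (cyc_group n w) \<times> UNIV,
       mult = (\<lambda>(g, m) (h, k). (g \<otimes>\<^bsub>cyc_group n w\<^esub> cyc_phi n w m h, m + k)),
       one = (\<one>\<^bsub>cyc_group n w\<^esub>, 0) \<rparr>"

definition xg :: "nat \<Rightarrow> int \<Rightarrow> nat word" where
  "xg n i = gen (nat (i mod int n))"

definition cor_w :: "nat \<Rightarrow> nat list \<Rightarrow> nat word" where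
  "cor_w n ps =
     concat (map (\<lambda>i. xg n (pext ps i + int i)) [0..<length ps + 1])
     @ winv (concat (map (\<lambda>i. xg n (pext ps i + int i + 1)) [0..<length ps]))"

end

theory Submission
  imports Defs
begin



lemma words_append[simp]: "u @ v \<in> words X \<longleftrightarrow> u \<in> words X \<and> v \<in> words X"
  by (auto simp: words_def)
lemma words_Cons[simp]: "a # v \<in> words X \<longleftrightarrow> fst a \<in> X \<and> v \<in> words X"
  by (cases a) (auto simp: words_def)
lemma words_Nil[simp]: "[] \<in> words X"
  by (auto simp: words_def)
lemma winv_Nil[simp]: "winv [] = []" by (simp add: winv_def)
lemma winv_Cons[simp]: "winv ((x,b) # w) = winv w @ [(x, \<not> b)]" by (simp add: winv_def)
lemma winv_append[simp]: "winv (u @ v) = winv v @ winv u" by (simp add: winv_def)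
lemma winv_winv[simp]: "winv (winv w) = w" by (induction w) (auto simp: winv_def)
lemma winv_words[simp]: "winv w \<in> words X \<longleftrightarrow> w \<in> words X"
  by (auto simp: words_def winv_def)
lemma gen_words[simp]: "gen x \<in> words X \<longleftrightarrow> x \<in> X" by (simp add: gen_def)
lemma winv_gen: "winv (gen x) = [(x, False)]" by (simp add: gen_def)

lemma pres_rel_words: "(u, v) \<in> pres_rel X R \<Longrightarrow> u \<in> words X \<and> v \<in> words X"
  by (induction rule: pres_rel.induct) auto

lemma pres_rel_left: "(u, v) \<in> pres_rel X R \<Longrightarrow> w \<in> words X \<Longrightarrow> (w @ u, w @ v) \<in> pres_rel X R"
proof (induction rule: pres_rel.induct)
  case (prefl u) then show ?case by (simp add: pres_rel.prefl)
next
  case (psym u v) then show ?case by (simp add: pres_rel.psym)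
next
  case (ptrans u v w') then show ?case by (meson pres_rel.ptrans)
next
  case (pfree u v x b) then show ?case using pres_rel.pfree[of "w @ u" X v x b R] by simp
next
  case (prel u v r) then show ?case using pres_rel.prel[of "w @ u" X v r R] by simp
qed

lemma pres_rel_right: "(u, v) \<in> pres_rel X R \<Longrightarrow> w \<in> words X \<Longrightarrow> (u @ w, v @ w) \<in> pres_rel X R"
proof (induction rule: pres_rel.induct)
  case (prefl u) then show ?case by (simp add: pres_rel.prefl)
next
  case (psym u v) then show ?case by (simp add: pres_rel.psym)
next
  case (ptrans u v w') then show ?case by (meson pres_rel.ptrans)
next
  case (pfree u v x b) then show ?case using pres_rel.pfree[of u X "v @ w" x b R] by simp
next
  case (prel u v r) then show ?case using pres_rel.prel[of u X "v @ w" r R] by simp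
qed

lemma pres_rel_app: "(u, v) \<in> pres_rel X R \<Longrightarrow> (u', v') \<in> pres_rel X R \<Longrightarrow> (u @ u', v @ v') \<in> pres_rel X R"
  by (meson pres_rel.ptrans pres_rel_left pres_rel_right pres_rel_words)

lemma pres_rel_equiv: "equiv (words X) (pres_rel X R)"
  unfolding equiv_def refl_on_def sym_def trans_def
  using pres_rel_words by (auto intro: pres_rel.intros)

lemma pres_rel_canc: "w \<in> words X \<Longrightarrow> (w @ winv w, []) \<in> pres_rel X R"
proof (induction w)
  case Nil then show ?case by (simp add: pres_rel.prefl)
next
  case (Cons a w)
  obtain x b where a: "a = (x, b)" by (cases a)
  have x: "x \<in> X" "w \<in> words X" using Cons a by auto
  have "([(x,b)] @ (w @ winv w) @ [(x, \<not> b)], [(x,b)] @ [] @ [(x, \<not> b)]) \<in> pres_rel X R"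
    using Cons x by (intro pres_rel_app pres_rel.prefl) auto
  moreover have "([] @ [(x,b), (x, \<not> b)] @ [], [] @ []) \<in> pres_rel X R"
    by (rule pres_rel.pfree) (use x in auto)
  ultimately show ?case using a by (auto intro: pres_rel.ptrans)
qed

lemma pres_rel_canc2: "w \<in> words X \<Longrightarrow> (winv w @ w, []) \<in> pres_rel X R"
  using pres_rel_canc[of "winv w" X R] by simp

lemma pres_rel_relator: "r \<in> R \<Longrightarrow> r \<in> words X \<Longrightarrow> (r, []) \<in> pres_rel X R"
  using pres_rel.prel[of "[]" X "[]" r R] by simp

definition pcl :: "'a set \<Rightarrow> 'a word set \<Rightarrow> 'a word \<Rightarrow> 'a word set" where
  "pcl X R w = pres_rel X R `` {w}"

lemma pcl_eq_iff: "u \<in> words X \<Longrightarrow> v \<in> words X \<Longrightarrow> pcl X R u = pcl X R v \<longleftrightarrow> (u, v) \<in> pres_rel X R"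
  unfolding pcl_def using eq_equiv_class_iff[OF pres_rel_equiv] by blast

lemma pcl_eqI: "(u, v) \<in> pres_rel X R \<Longrightarrow> pcl X R u = pcl X R v"
  unfolding pcl_def using equiv_class_eq[OF pres_rel_equiv] by blast

lemma pcl_carrier: "w \<in> words X \<Longrightarrow> pcl X R w \<in> carrier (pres_group X R)"
  by (simp add: pcl_def pres_group_def quotientI)

lemma carrier_pcl: "A \<in> carrier (pres_group X R) \<Longrightarrow> \<exists>w \<in> words X. A = pcl X R w"
  by (auto simp: pcl_def pres_group_def quotient_def)

lemma pcl_self: "w \<in> words X \<Longrightarrow> w \<in> pcl X R w"
  by (simp add: pcl_def pres_rel.prefl)

lemma pcl_mult: "u \<in> words X \<Longrightarrow> v \<in> words X \<Longrightarrow>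
   pcl X R u \<otimes>\<^bsub>pres_group X R\<^esub> pcl X R v = pcl X R (u @ v)"
proof -
  assume u: "u \<in> words X" and v: "v \<in> words X"
  have "\<And>a b. a \<in> pcl X R u \<Longrightarrow> b \<in> pcl X R v \<Longrightarrow> pres_rel X R `` {a @ b} = pcl X R (u @ v)"
    unfolding pcl_def[symmetric]
    by (metis Image_singleton_iff pcl_def pcl_eqI pres_rel.psym pres_rel_app)
  moreover have "u \<in> pcl X R u" "v \<in> pcl X R v" using u v by (auto simp: pcl_self)
  ultimately show ?thesis unfolding pres_group_def by auto
qed

lemma pcl_one: "\<one>\<^bsub>pres_group X R\<^esub> = pcl X R []"
  by (simp add: pres_group_def pcl_def)

lemma pres_group_group: "group (pres_group X R)"
proof (rule groupI)
  let ?G = "pres_group X R"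
  fix x y z assume x: "x \<in> carrier ?G" and y: "y \<in> carrier ?G" and z: "z \<in> carrier ?G"
  obtain u v w where u: "u \<in> words X" "x = pcl X R u" and v: "v \<in> words X" "y = pcl X R v"
     and w: "w \<in> words X" "z = pcl X R w"
    using x y z carrier_pcl by metis
  show "x \<otimes>\<^bsub>?G\<^esub> y \<in> carrier ?G" using u v by (simp add: pcl_mult pcl_carrier)
  show "x \<otimes>\<^bsub>?G\<^esub> y \<otimes>\<^bsub>?G\<^esub> z = x \<otimes>\<^bsub>?G\<^esub> (y \<otimes>\<^bsub>?G\<^esub> z)" using u v w by (simp add: pcl_mult)
next
  show "\<one>\<^bsub>pres_group X R\<^esub> \<in> carrier (pres_group X R)" by (simp add: pcl_one pcl_carrier)
next
  fix x assume x: "x \<in> carrier (pres_group X R)"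
  obtain u where u: "u \<in> words X" "x = pcl X R u" using x carrier_pcl by metis
  show "\<one>\<^bsub>pres_group X R\<^esub> \<otimes>\<^bsub>pres_group X R\<^esub> x = x" using u by (simp add: pcl_one pcl_mult)
  have "pcl X R (winv u) \<otimes>\<^bsub>pres_group X R\<^esub> x = \<one>\<^bsub>pres_group X R\<^esub>"
    using u by (simp add: pcl_mult pcl_one pcl_eqI pres_rel_canc2)
  then show "\<exists>y\<in>carrier (pres_group X R). y \<otimes>\<^bsub>pres_group X R\<^esub> x = \<one>\<^bsub>pres_group X R\<^esub>"
    using u by (metis pcl_carrier winv_words)
qed

lemma pcl_inv: "w \<in> words X \<Longrightarrow> inv\<^bsub>pres_group X R\<^esub> (pcl X R w) = pcl X R (winv w)"
proof -
  assume w: "w \<in> words X"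
  interpret group "pres_group X R" by (rule pres_group_group)
  have "pcl X R w \<otimes>\<^bsub>pres_group X R\<^esub> pcl X R (winv w) = \<one>\<^bsub>pres_group X R\<^esub>"
    using w by (simp add: pcl_mult pcl_one pcl_eqI pres_rel_canc)
  then show ?thesis using w by (metis inv_comm inv_equality pcl_carrier winv_words)
qed

definition evalw :: "('b, 'c) monoid_scheme \<Rightarrow> ('a \<Rightarrow> 'b) \<Rightarrow> 'a word \<Rightarrow> 'b" where
  "evalw H f w = foldr (\<lambda>(x, b) acc. (if b then f x else inv\<^bsub>H\<^esub> (f x)) \<otimes>\<^bsub>H\<^esub> acc) w \<one>\<^bsub>H\<^esub>"

lemma evalw_Nil[simp]: "evalw H f [] = \<one>\<^bsub>H\<^esub>" by (simp add: evalw_def)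
lemma evalw_Cons[simp]: "evalw H f ((x,b) # w) = (if b then f x else inv\<^bsub>H\<^esub> (f x)) \<otimes>\<^bsub>H\<^esub> evalw H f w"
  by (simp add: evalw_def)

locale evalctx = group H for H (structure) +
  fixes f :: "'a \<Rightarrow> 'b" and X :: "'a set"
  assumes f_closed: "x \<in> X \<Longrightarrow> f x \<in> carrier H"
begin

lemma evalw_closed[simp]: "w \<in> words X \<Longrightarrow> evalw H f w \<in> carrier H"
proof (induction w)
  case (Cons a w) then show ?case using f_closed by (cases a) auto
qed simp

lemma evalw_append: "u \<in> words X \<Longrightarrow> v \<in> words X \<Longrightarrow> evalw H f (u @ v) = evalw H f u \<otimes> evalw H f v"
proof (induction u)
  case (Cons a u) then show ?case using f_closed by (cases a) (auto simp: m_assoc)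
qed simp

lemma evalw_gen[simp]: "x \<in> X \<Longrightarrow> evalw H f (gen x) = f x"
  using f_closed by (simp add: gen_def)

lemma evalw_neg[simp]: "x \<in> X \<Longrightarrow> evalw H f [(x, False)] = inv f x"
  using f_closed by simp

lemma evalw_winv: "w \<in> words X \<Longrightarrow> evalw H f (winv w) = inv (evalw H f w)"
proof (induction w)
  case (Cons a w)
  obtain x b where a: "a = (x,b)" by (cases a)
  then have x: "x \<in> X" "w \<in> words X" using Cons by auto
  have "evalw H f (winv (a # w)) = inv (evalw H f w) \<otimes> evalw H f [(x, \<not> b)]"
    using a x by (simp add: evalw_append Cons.IH)
  also have "\<dots> = inv (evalw H f w) \<otimes> inv (if b then f x else inv f x)"
    using x f_closed by auto
  also have "\<dots> = inv (evalw H f (a # w))"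
    using a x f_closed by (simp add: inv_mult_group)
  finally show ?case .
qed simp

lemma evalw_respects:
  assumes R: "\<And>r. r \<in> R \<Longrightarrow> r \<in> words X \<Longrightarrow> evalw H f r = \<one>"
  shows "(u, v) \<in> pres_rel X R \<Longrightarrow> evalw H f u = evalw H f v"
proof (induction rule: pres_rel.induct)
  case (pfree u v x b)
  have fx: "f x \<in> carrier H" using pfree f_closed by auto
  have "evalw H f ([(x, b), (x, \<not> b)] @ v) = evalw H f v"
    using pfree fx by (cases b) (simp_all add: m_assoc[symmetric])
  then show ?case using pfree fx evalw_append by (metis words_append words_Cons fst_conv words_Nil)
next
  case (prel u v r)
  then show ?case by (simp add: evalw_append R)
qed auto

definition lift :: "'a word set \<Rightarrow> 'a word set \<Rightarrow> 'b" where
  "lift R A = evalw H f (SOME w. w \<in> A)"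

lemma lift_pcl:
  assumes R: "\<And>r. r \<in> R \<Longrightarrow> r \<in> words X \<Longrightarrow> evalw H f r = \<one>" and w: "w \<in> words X"
  shows "lift R (pcl X R w) = evalw H f w"
proof -
  have "(SOME u. u \<in> pcl X R w) \<in> pcl X R w" using w pcl_self by (metis someI)
  then have "(w, SOME u. u \<in> pcl X R w) \<in> pres_rel X R" by (simp add: pcl_def)
  then show ?thesis unfolding lift_def using evalw_respects[OF R] by metis
qed

lemma lift_hom:
  assumes R: "\<And>r. r \<in> R \<Longrightarrow> r \<in> words X \<Longrightarrow> evalw H f r = \<one>"
  shows "lift R \<in> hom (pres_group X R) H"
proof (rule homI)
  fix A assume "A \<in> carrier (pres_group X R)"
  then obtain w where "w \<in> words X" "A = pcl X R w" using carrier_pcl by metis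
  then show "lift R A \<in> carrier H" using lift_pcl[OF R] by simp
next
  fix A B assume "A \<in> carrier (pres_group X R)" "B \<in> carrier (pres_group X R)"
  then obtain u v where "u \<in> words X" "A = pcl X R u" "v \<in> words X" "B = pcl X R v" using carrier_pcl by metis
  then show "lift R (A \<otimes>\<^bsub>pres_group X R\<^esub> B) = lift R A \<otimes> lift R B"
    using lift_pcl[OF R] by (simp add: pcl_mult evalw_append)
qed

end

lemma hom_eq_on_gens:
  assumes H: "group H" and h1: "h1 \<in> hom (pres_group X R) H" and h2: "h2 \<in> hom (pres_group X R) H"
    and gens: "\<And>x. x \<in> X \<Longrightarrow> h1 (pcl X R (gen x)) = h2 (pcl X R (gen x))"
  shows "A \<in> carrier (pres_group X R) \<Longrightarrow> h1 A = h2 A"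
proof -
  interpret P: group "pres_group X R" by (rule pres_group_group)
  interpret g1: group_hom "pres_group X R" H h1 using H h1 by (simp add: group_hom_def group_hom_axioms_def pres_group_group)
  interpret g2: group_hom "pres_group X R" H h2 using H h2 by (simp add: group_hom_def group_hom_axioms_def pres_group_group)
  have *: "w \<in> words X \<Longrightarrow> h1 (pcl X R w) = h2 (pcl X R w)" for w
  proof (induction w)
    case Nil then show ?case by (simp add: pcl_one[symmetric])
  next
    case (Cons a w)
    obtain x b where a: "a = (x,b)" by (cases a)
    then have x: "x \<in> X" "w \<in> words X" using Cons by auto
    have eq: "pcl X R (a # w) = pcl X R [(x,b)] \<otimes>\<^bsub>pres_group X R\<^esub> pcl X R w"
      using a x by (simp add: pcl_mult)
    have gx: "h1 (pcl X R [(x,b)]) = h2 (pcl X R [(x,b)])"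
    proof (cases b)
      case True then show ?thesis using gens[OF x(1)] by (simp add: gen_def)
    next
      case False
      have "pcl X R [(x,b)] = inv\<^bsub>pres_group X R\<^esub> (pcl X R (gen x))"
        using False x by (simp add: pcl_inv winv_gen)
      then show ?thesis using gens[OF x(1)] x by (simp add: pcl_carrier)
    qed
    show ?case using eq gx Cons x a by (simp add: pcl_carrier)
  qed
  assume "A \<in> carrier (pres_group X R)"
  then show "h1 A = h2 A" using carrier_pcl * by metis
qed

lemma iso_by_inverse:
  assumes h1: "h1 \<in> hom G H" and h2: "h2 \<in> hom H G"
    and l: "\<And>x. x \<in> carrier G \<Longrightarrow> h2 (h1 x) = x" and r: "\<And>y. y \<in> carrier H \<Longrightarrow> h1 (h2 y) = y"
  shows "G \<cong> H"
proof -
  have "bij_betw h1 (carrier G) (carrier H)"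
    by (rule bij_betw_byWitness[where f'=h2]) (use h1 h2 l r in \<open>auto simp: hom_def\<close>)
  then show ?thesis using h1 by (auto intro: is_isoI isoI)
qed


definition gprod :: "('b, 'c) monoid_scheme \<Rightarrow> ('i \<Rightarrow> 'b) \<Rightarrow> 'i list \<Rightarrow> 'b" where
  "gprod K F xs = foldr (\<lambda>i acc. F i \<otimes>\<^bsub>K\<^esub> acc) xs \<one>\<^bsub>K\<^esub>"

lemma gprod_Nil[simp]: "gprod K F [] = \<one>\<^bsub>K\<^esub>" by (simp add: gprod_def)
lemma gprod_Cons[simp]: "gprod K F (x # xs) = F x \<otimes>\<^bsub>K\<^esub> gprod K F xs" by (simp add: gprod_def)

lemma (in group) gprod_closed[simp]: "(\<And>i. i \<in> set xs \<Longrightarrow> F i \<in> carrier G) \<Longrightarrow> gprod G F xs \<in> carrier G"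
  by (induction xs) auto

lemma (in group) gprod_append: "(\<And>i. i \<in> set (xs @ ys) \<Longrightarrow> F i \<in> carrier G) \<Longrightarrow>
   gprod G F (xs @ ys) = gprod G F xs \<otimes> gprod G F ys"
  by (induction xs) (auto simp: m_assoc)

lemma (in group) gprod_snoc: "(\<And>i. i \<in> set xs \<Longrightarrow> F i \<in> carrier G) \<Longrightarrow> F x \<in> carrier G \<Longrightarrow>
   gprod G F (xs @ [x]) = gprod G F xs \<otimes> F x"
  by (subst gprod_append) auto

lemma (in group) gprod_cong: "(\<And>i. i \<in> set xs \<Longrightarrow> F i = F' i) \<Longrightarrow> gprod G F xs = gprod G F' xs"
  by (induction xs) auto

lemma gprod_hom:
  assumes "group G" "group H" "h \<in> hom G H" "\<And>i. i \<in> set xs \<Longrightarrow> F i \<in> carrier G"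
  shows "h (gprod G F xs) = gprod H (\<lambda>i. h (F i)) xs"
proof -
  interpret group_hom G H h using assms by (simp add: group_hom_def group_hom_axioms_def)
  show ?thesis using assms(4) by (induction xs) auto
qed

lemma (in evalctx) evalw_concat:
  "(\<And>i. i \<in> set xs \<Longrightarrow> g i \<in> words X) \<Longrightarrow> evalw H f (concat (map g xs)) = gprod H (\<lambda>i. evalw H f (g i)) xs"
proof (induction xs)
  case (Cons x xs)
  have "concat (map g xs) \<in> words X" using Cons.prems by (auto simp: words_def)
  then show ?case using Cons by (simp add: evalw_append)
qed simp

lemma genpow_words[simp]: "genpow x k \<in> words X \<longleftrightarrow> (k = 0 \<or> x \<in> X)"
  by (auto simp: genpow_def words_def)

lemma (in monoid) pow_comm1: "x \<in> carrier G \<Longrightarrow> x \<otimes> x [^] (m::nat) = x [^] m \<otimes> x"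
proof -
  assume x: "x \<in> carrier G"
  have "x \<otimes> x [^] m = x [^] Suc m" using x by (rule nat_pow_Suc2[symmetric])
  also have "\<dots> = x [^] m \<otimes> x" by (rule nat_pow_Suc)
  finally show ?thesis .
qed

lemma (in evalctx) evalw_genpow: "x \<in> X \<Longrightarrow> evalw H f (genpow x k) = f x [^] k"
proof -
  assume x: "x \<in> X"
  note fx = f_closed[OF x]
  have p: "evalw H f (replicate m (x, True)) = f x [^] m" for m
  proof (induction m)
    case (Suc m)
    have "evalw H f (replicate (Suc m) (x, True)) = f x \<otimes> f x [^] m" using Suc by simp
    also have "\<dots> = f x [^] Suc m" using fx by (rule nat_pow_Suc2[symmetric])
    finally show ?case .
  qed simp
  have q: "evalw H f (replicate m (x, False)) = inv f x [^] m" for m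
  proof (induction m)
    case (Suc m)
    have "evalw H f (replicate (Suc m) (x, False)) = inv f x \<otimes> inv f x [^] m" using Suc by simp
    also have "\<dots> = inv f x [^] Suc m" using fx by (intro nat_pow_Suc2[symmetric]) simp
    finally show ?case .
  qed simp
  show ?thesis
  proof (cases "0 \<le> k")
    case True
    have g: "genpow x k = replicate (nat k) (x, True)" using True by (simp add: genpow_def)
    have "f x [^] k = f x [^] (nat k)" using True by (metis int_nat_eq int_pow_int)
    then show ?thesis using g p by simp
  next
    case False
    have g: "genpow x k = replicate (nat (- k)) (x, False)" using False by (simp add: genpow_def)
    have "f x [^] k = inv (f x [^] (nat (- k)))" using False unfolding int_pow_def2 by simp
    then show ?thesis using g q fx nat_pow_inv by simp
  qed
qed




locale acg = group K for K (structure) +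
  fixes a c
  assumes a_closed[simp]: "a \<in> carrier K" and c_closed[simp]: "c \<in> carrier K"
begin

definition C :: "int \<Rightarrow> 'a" where "C k = c [^] k"
definition chi :: "int \<Rightarrow> 'a" where "chi k = C k \<otimes> a \<otimes> C (- k - 1)"

lemma C_closed[simp]: "C k \<in> carrier K" by (simp add: C_def)
lemma chi_closed[simp]: "chi k \<in> carrier K" by (simp add: chi_def)
lemma C_add: "C (i + j) = C i \<otimes> C j" by (simp add: C_def int_pow_mult)
lemma C_0[simp]: "C 0 = \<one>" by (simp add: C_def)
lemma C_1: "C 1 = c" by (simp add: C_def)
lemma C_inv: "inv (C k) = C (- k)" by (simp add: C_def int_pow_neg)
lemma C_comm: "C i \<otimes> C j = C j \<otimes> C i" by (metis C_add add.commute)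

lemma C_split: "k = i + j \<Longrightarrow> C k = C i \<otimes> C j" by (simp add: C_add)
lemma C_cancel: "x \<in> carrier K \<Longrightarrow> C i \<otimes> (C (- i) \<otimes> x) = x"
  by (simp add: m_assoc[symmetric] C_add[symmetric])
lemma C_cancel': "x \<in> carrier K \<Longrightarrow> C (- i) \<otimes> (C i \<otimes> x) = x"
  by (simp add: m_assoc[symmetric] C_add[symmetric])

lemma C_cancel2: "i + j = 0 \<Longrightarrow> x \<in> carrier K \<Longrightarrow> C i \<otimes> (C j \<otimes> x) = x"
  by (simp add: m_assoc[symmetric] C_add[symmetric])

lemma C_addl: "C i \<otimes> (C j \<otimes> x) = C (i + j) \<otimes> x" if "x \<in> carrier K" for x
  using that by (simp add: C_add m_assoc)

lemma chi_step: "C s \<otimes> a = chi s \<otimes> C (s + 1)"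
proof -
  have "chi s \<otimes> C (s + 1) = C s \<otimes> a \<otimes> (C (- s - 1) \<otimes> C (s + 1))"
    by (simp add: chi_def m_assoc)
  also have "\<dots> = C s \<otimes> a" by (simp flip: C_add)
  finally show ?thesis by simp
qed

lemma chi_conj: "C d \<otimes> chi k \<otimes> C (- d) = chi (k + d)"
proof -
  have "C d \<otimes> chi k \<otimes> C (- d) = C (d + k) \<otimes> a \<otimes> (C (- k - 1) \<otimes> C (- d))"
    by (simp add: chi_def m_assoc C_add)
  also have "\<dots> = chi (k + d)" by (simp add: chi_def flip: C_add) (simp add: algebra_simps)
  finally show ?thesis .
qed

lemma tele1:
  "m \<le> k \<Longrightarrow> C (Q m) \<otimes> gprod K (\<lambda>i. a \<otimes> C (Q (i + 1) - Q i - 1)) [m..<k]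
      = gprod K (\<lambda>i. chi (Q i)) [m..<k] \<otimes> C (Q k)"
proof (induction k)
  case 0 then show ?case by simp
next
  case (Suc k)
  show ?case
  proof (cases "m = Suc k")
    case True then show ?thesis by simp
  next
    case False
    then have mk: "m \<le> k" using Suc by simp
    have "C (Q m) \<otimes> gprod K (\<lambda>i. a \<otimes> C (Q (i + 1) - Q i - 1)) [m..<Suc k]
        = (C (Q m) \<otimes> gprod K (\<lambda>i. a \<otimes> C (Q (i + 1) - Q i - 1)) [m..<k]) \<otimes> a \<otimes> C (Q (k + 1) - Q k - 1)"
      using mk by (simp add: gprod_snoc m_assoc)
    also have "\<dots> = gprod K (\<lambda>i. chi (Q i)) [m..<k] \<otimes> (C (Q k) \<otimes> a) \<otimes> C (Q (k + 1) - Q k - 1)"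
      using Suc.IH[OF mk] by (simp add: m_assoc)
    also have "\<dots> = gprod K (\<lambda>i. chi (Q i)) [m..<k] \<otimes> chi (Q k) \<otimes> (C (Q k + 1) \<otimes> C (Q (k + 1) - Q k - 1))"
      by (simp add: chi_step m_assoc)
    also have "\<dots> = gprod K (\<lambda>i. chi (Q i)) [m..<Suc k] \<otimes> C (Q (Suc k))"
      using mk by (simp add: gprod_snoc flip: C_add)
    finally show ?thesis .
  qed
qed

lemma tele2:
  "m \<le> k \<Longrightarrow> gprod K (\<lambda>i. C (P i) \<otimes> a \<otimes> C (- P i)) [m..<k] \<otimes> C (P k)
      = C (P m) \<otimes> gprod K (\<lambda>i. a \<otimes> C (P (i + 1) - P i)) [m..<k]"
proof (induction k)
  case 0 then show ?case by simp
next
  case (Suc k)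
  show ?case
  proof (cases "m = Suc k")
    case True then show ?thesis by simp
  next
    case False
    then have mk: "m \<le> k" using Suc by simp
    have "gprod K (\<lambda>i. C (P i) \<otimes> a \<otimes> C (- P i)) [m..<Suc k] \<otimes> C (P (Suc k))
        = gprod K (\<lambda>i. C (P i) \<otimes> a \<otimes> C (- P i)) [m..<k] \<otimes> C (P k) \<otimes> a \<otimes> (C (- P k) \<otimes> C (P (Suc k)))"
      using mk by (simp add: gprod_snoc m_assoc)
    also have "\<dots> = C (P m) \<otimes> gprod K (\<lambda>i. a \<otimes> C (P (i + 1) - P i)) [m..<k] \<otimes> a \<otimes> C (P (k + 1) - P k)"
      using Suc.IH[OF mk] by (simp flip: C_add)
    also have "\<dots> = C (P m) \<otimes> gprod K (\<lambda>i. a \<otimes> C (P (i + 1) - P i)) [m..<Suc k]"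
      using mk by (simp add: gprod_snoc m_assoc)
    finally show ?thesis .
  qed
qed

definition U :: "nat list \<Rightarrow> 'a" where
  "U ps = gprod K (\<lambda>i. a \<otimes> C (pext ps (i + 1) - pext ps i)) [0..<length ps]"

lemma U_closed[simp]: "U ps \<in> carrier K" by (simp add: U_def)

lemma star:
  "c \<otimes> U ps = U ps \<otimes> a \<longleftrightarrow>
   gprod K (\<lambda>i. chi (pext ps i + int i + 1)) [0..<length ps]
     = gprod K (\<lambda>i. chi (pext ps i + int i)) [0..<length ps + 1]"
proof -
  let ?r = "length ps"
  let ?P1 = "gprod K (\<lambda>i. chi (pext ps i + int i + 1)) [0..<?r]"
  let ?P0' = "gprod K (\<lambda>i. chi (pext ps i + int i)) [0..<?r]"
  let ?P0 = "gprod K (\<lambda>i. chi (pext ps i + int i)) [0..<?r + 1]"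
  have pr: "pext ps ?r = -1" by (simp add: pext_def)
  have e1: "C (pext ps 0 + 1) \<otimes> U ps = ?P1 \<otimes> C (int ?r)"
    using tele1[of 0 ?r "\<lambda>i. pext ps i + int i + 1"] pr by (simp add: U_def algebra_simps)
  have e0: "C (pext ps 0) \<otimes> U ps = ?P0' \<otimes> C (int ?r - 1)"
    using tele1[of 0 ?r "\<lambda>i. pext ps i + int i"] pr by (simp add: U_def algebra_simps)
  have "C (pext ps 0) \<otimes> (U ps \<otimes> a) = ?P0' \<otimes> (C (int ?r - 1) \<otimes> a)"
    using e0 by (simp add: m_assoc[symmetric])
  also have "\<dots> = ?P0' \<otimes> chi (int ?r - 1) \<otimes> C (int ?r)"
    by (simp add: chi_step m_assoc)
  also have "\<dots> = ?P0 \<otimes> C (int ?r)"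
    using pr by (simp add: gprod_snoc)
  finally have f0: "C (pext ps 0) \<otimes> (U ps \<otimes> a) = ?P0 \<otimes> C (int ?r)" .
  have f1: "C (pext ps 0) \<otimes> (c \<otimes> U ps) = ?P1 \<otimes> C (int ?r)"
    using e1 by (simp add: C_add C_1 m_assoc)
  have "c \<otimes> U ps = U ps \<otimes> a \<longleftrightarrow> C (pext ps 0) \<otimes> (c \<otimes> U ps) = C (pext ps 0) \<otimes> (U ps \<otimes> a)"
    by simp
  also have "\<dots> \<longleftrightarrow> ?P1 \<otimes> C (int ?r) = ?P0 \<otimes> C (int ?r)" using f0 f1 by simp
  also have "\<dots> \<longleftrightarrow> ?P1 = ?P0" by simp
  finally show ?thesis .
qed

definition Aimg :: "nat \<Rightarrow> 'a" where
  "Aimg i = C (- (int i - 1)) \<otimes> a \<otimes> C (int i - 1)"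

lemma Aimg_closed[simp]: "Aimg i \<in> carrier K" by (simp add: Aimg_def)

lemma Aimg_Suc: "Aimg (Suc i) = inv c \<otimes> Aimg i \<otimes> c"
proof -
  have e1: "C (- (int (Suc i) - 1)) = C (- 1) \<otimes> C (- (int i - 1))" by (rule C_split) simp
  have e2: "C (int (Suc i) - 1) = C (int i - 1) \<otimes> C 1" by (rule C_split) simp
  show ?thesis unfolding Aimg_def e1 e2 by (simp add: C_1 C_inv[symmetric] m_assoc)
qed

lemma Aimg_1: "Aimg 1 = a" by (simp add: Aimg_def)


end


lemma (in group) comm_nat_pow:
  assumes a: "a \<in> carrier G" and x: "x \<in> carrier G" and ax: "a \<otimes> x = x \<otimes> a"
  shows "a \<otimes> x [^] (m::nat) = x [^] m \<otimes> a"
proof (induction m)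
  case (Suc m)
  have "a \<otimes> x [^] Suc m = (a \<otimes> x [^] m) \<otimes> x" using a x by (simp add: m_assoc)
  also have "\<dots> = x [^] m \<otimes> (a \<otimes> x)" unfolding Suc using a x by (simp add: m_assoc)
  also have "\<dots> = x [^] m \<otimes> (x \<otimes> a)" unfolding ax ..
  also have "\<dots> = x [^] Suc m \<otimes> a" using a x by (simp add: m_assoc)
  finally show ?case .
qed (use a in simp)

lemma (in group) comm_inv:
  assumes a: "a \<in> carrier G" and y: "y \<in> carrier G" and ay: "a \<otimes> y = y \<otimes> a"
  shows "a \<otimes> inv y = inv y \<otimes> a"
proof -
  have "a \<otimes> inv y = inv y \<otimes> (y \<otimes> a) \<otimes> inv y" using a y by (simp add: m_assoc[symmetric])
  also have "\<dots> = inv y \<otimes> (a \<otimes> y) \<otimes> inv y" unfolding ay ..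
  also have "\<dots> = inv y \<otimes> a" using a y by (simp add: m_assoc)
  finally show ?thesis .
qed

lemma (in group) comm_int_pow:
  assumes "a \<in> carrier G" "x \<in> carrier G" "a \<otimes> x = x \<otimes> a"
  shows "a \<otimes> x [^] (d::int) = x [^] d \<otimes> a"
proof (cases "d < 0")
  case True
  have h: "a \<otimes> x [^] (-d) = x [^] (-d) \<otimes> a" using comm_nat_pow[OF assms, of "nat (-d)"] True by simp
  have "x [^] d = inv (x [^] (-d))" using int_pow_neg[OF assms(2), of "-d"] by simp
  then show ?thesis using comm_inv[OF assms(1) int_pow_closed[OF assms(2)] h] by simp
next
  case False
  then show ?thesis using comm_nat_pow[OF assms, of "nat d"] by simp
qed

locale acgn = acg +
  fixes n :: nat and ps :: "nat list"
  assumes comm: "a \<otimes> C (int n) = C (int n) \<otimes> a"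
    and pbound: "\<forall>p\<in>set ps. p \<le> n - 1"
    and n_pos: "n \<ge> 1"
begin

lemma comm_mult: "a \<otimes> C (int n * d) = C (int n * d) \<otimes> a"
proof -
  have "C (int n * d) = C (int n) [^] d" by (simp add: C_def int_pow_pow)
  then show ?thesis using comm_int_pow[of a "C (int n)" d] comm by simp
qed

lemma conj_n: "C j \<otimes> a \<otimes> C (- j) = C (j + int n * d) \<otimes> a \<otimes> C (- (j + int n * d))"
proof -
  have e1: "C (j + int n * d) = C j \<otimes> C (int n * d)" by (simp add: C_add)
  have e2: "C (- (j + int n * d)) = C (- (int n * d)) \<otimes> C (- j)" by (rule C_split) simp
  have "C (j + int n * d) \<otimes> a \<otimes> C (- (j + int n * d))
      = C j \<otimes> ((C (int n * d) \<otimes> a) \<otimes> (C (- (int n * d)) \<otimes> C (- j)))"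
    unfolding e1 e2 by (simp add: m_assoc)
  also have "\<dots> = C j \<otimes> ((a \<otimes> C (int n * d)) \<otimes> (C (- (int n * d)) \<otimes> C (- j)))"
    by (simp only: comm_mult)
  also have "\<dots> = C j \<otimes> a \<otimes> C (- j)" by (simp add: m_assoc C_cancel)
  finally show ?thesis by simp
qed

lemma chi_alt: "chi k = C k \<otimes> a \<otimes> C (- k) \<otimes> C (- 1)"
proof -
  have "C (- k - 1) = C (- k) \<otimes> C (- 1)" by (rule C_split) simp
  then show ?thesis unfolding chi_def by (simp add: m_assoc)
qed

lemma chi_mod: "chi (k mod int n) = chi k"
proof -
  have k: "k mod int n + int n * (k div int n) = k" by simp
  show ?thesis unfolding chi_alt using conj_n[of "k mod int n" "k div int n"] k by simp
qed

definition H :: "nat \<Rightarrow> 'a" where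
  "H j = gprod K (\<lambda>k. Aimg (n - ps ! k)) [0..<j]"
definition T :: "nat \<Rightarrow> 'a" where
  "T j = inv (H j) \<otimes> c \<otimes> H j"

lemma H_closed[simp]: "H j \<in> carrier K" by (simp add: H_def)
lemma T_closed[simp]: "T j \<in> carrier K" by (simp add: T_def)

lemma Aimg_n1: "Aimg (n + 1) = a"
  using conj_n[of 0 "-1"] by (simp add: Aimg_def)

lemma Aimg_p: "k < length ps \<Longrightarrow> Aimg (n - ps ! k) = C (pext ps k + 1) \<otimes> a \<otimes> C (- (pext ps k + 1))"
proof -
  assume k: "k < length ps"
  then have p: "ps ! k \<le> n - 1" using pbound by auto
  then have e: "int (n - ps ! k) - 1 = - (int (ps ! k) + 1) + int n" using n_pos by simp
  have e': "- (int (n - ps ! k) - 1) = int (ps ! k) + 1 + int n * (- 1)" using e by simp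
  have "Aimg (n - ps ! k) = C (int (ps ! k) + 1 + int n * (- 1)) \<otimes> a \<otimes> C (- (int (ps ! k) + 1 + int n * (- 1)))"
    unfolding Aimg_def e' using e by (simp add: algebra_simps)
  also have "\<dots> = C (pext ps k + 1) \<otimes> a \<otimes> C (- (pext ps k + 1))"
    using k conj_n[of "int (ps ! k) + 1" "-1"] by (simp add: pext_def)
  finally show ?thesis .
qed

lemma H_Suc: "H (Suc j) = H j \<otimes> Aimg (n - ps ! j)"
  by (simp add: H_def gprod_snoc)

lemma T_Suc: "T (Suc j) = inv (Aimg (n - ps ! j)) \<otimes> T j \<otimes> Aimg (n - ps ! j)"
  by (simp add: T_def H_Suc inv_mult_group m_assoc)

lemma T_0: "T 0 = c" by (simp add: T_def H_def)

lemma H_r: "H (length ps) = C (pext ps 0 + 1) \<otimes> U ps"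
proof -
  let ?P = "\<lambda>k. pext ps k + 1"
  have "H (length ps) = gprod K (\<lambda>i. C (?P i) \<otimes> a \<otimes> C (- ?P i)) [0..<length ps]"
    unfolding H_def by (rule gprod_cong) (simp add: Aimg_p)
  also have "\<dots> = gprod K (\<lambda>i. C (?P i) \<otimes> a \<otimes> C (- ?P i)) [0..<length ps] \<otimes> C (?P (length ps))"
    by (simp add: pext_def)
  also have "\<dots> = C (?P 0) \<otimes> gprod K (\<lambda>i. a \<otimes> C (?P (i + 1) - ?P i)) [0..<length ps]"
    by (rule tele2) simp
  also have "\<dots> = C (pext ps 0 + 1) \<otimes> U ps" by (simp add: U_def)
  finally show ?thesis .
qed

lemma T_r: "T (length ps) = inv (U ps) \<otimes> c \<otimes> U ps"
proof -
  let ?p = "pext ps 0 + 1"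
  have cc: "C (- ?p) \<otimes> (c \<otimes> (C ?p \<otimes> x)) = c \<otimes> x" if "x \<in> carrier K" for x
  proof -
    have "c \<otimes> (C ?p \<otimes> x) = C ?p \<otimes> (c \<otimes> x)"
      using that C_comm[of 1 ?p] by (simp add: C_1 m_assoc[symmetric])
    then show ?thesis using that by (simp add: C_cancel2)
  qed
  have "T (length ps) = inv (U ps) \<otimes> (C (- ?p) \<otimes> (c \<otimes> (C ?p \<otimes> U ps)))"
    unfolding T_def H_r by (simp add: inv_mult_group C_inv m_assoc)
  also have "\<dots> = inv (U ps) \<otimes> (c \<otimes> U ps)" using cc[of "U ps"] by simp
  finally show ?thesis by (simp add: m_assoc)
qed

end




lemma shift_Nil[simp]: "shift n k [] = []" by (simp add: shift_def)
lemma shift_Cons[simp]: "shift n k ((x, b) # w) = (nat ((int x + k) mod int n), b) # shift n k w"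
  by (simp add: shift_def)
lemma shift_append[simp]: "shift n k (u @ v) = shift n k u @ shift n k v" by (simp add: shift_def)
lemma shift_winv: "shift n k (winv w) = winv (shift n k w)"
  by (simp add: shift_def winv_def rev_map case_prod_beta)
lemma shift_words: "n > 0 \<Longrightarrow> shift n k w \<in> words {..<n}"
  by (auto simp: shift_def words_def nat_less_iff)
lemma shift_shift: "n > 0 \<Longrightarrow> shift n j (shift n k w) = shift n (j + k) w"
  by (auto simp: shift_def mod_add_right_eq add.commute add.left_commute)
lemma shift_mod: "shift n (k mod int n) w = shift n k w"
  by (simp add: shift_def mod_add_right_eq)
lemma shift_0: "w \<in> words {..<n} \<Longrightarrow> shift n 0 w = w"
  by (induction w) auto
lemma shift_concat: "shift n k (concat ws) = concat (map (shift n k) ws)"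
  by (induction ws) auto
lemma xg_words: "n > 0 \<Longrightarrow> xg n i \<in> words {..<n}"
  by (simp add: xg_def nat_less_iff)
lemma words_concat: "concat ws \<in> words X \<longleftrightarrow> (\<forall>w\<in>set ws. w \<in> words X)"
  by (auto simp: words_def)
lemma cor_w_words: "n > 0 \<Longrightarrow> cor_w n ps \<in> words {..<n}"
  by (simp add: cor_w_def words_concat xg_words del: upt_Suc)

context acg
begin
lemma C_rinv[simp]: "C k \<otimes> C (- k) = \<one>" by (simp flip: C_add)
lemma C_linv[simp]: "C (- k) \<otimes> C k = \<one>" by (simp flip: C_add)
lemma conj_mult: "y \<in> carrier K \<Longrightarrow> z \<in> carrier K \<Longrightarrow>
  (C k \<otimes> y \<otimes> C (- k)) \<otimes> (C k \<otimes> z \<otimes> C (- k)) = C k \<otimes> (y \<otimes> z) \<otimes> C (- k)"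
  by (simp add: m_assoc C_cancel')
lemma conj_inv: "y \<in> carrier K \<Longrightarrow> inv (C k \<otimes> y \<otimes> C (- k)) = C k \<otimes> inv y \<otimes> C (- k)"
  by (simp add: inv_mult_group C_inv m_assoc)
end

context acgn
begin

definition chif :: "nat \<Rightarrow> 'a" where "chif j = chi (int j)"

lemma ev: "evalctx K chif {..<n}"
  by unfold_locales (simp add: chif_def)

lemma evalw_shift: "u \<in> words {..<n} \<Longrightarrow> evalw K chif (shift n k u) = C k \<otimes> evalw K chif u \<otimes> C (- k)"
proof (induction u)
  case Nil then show ?case by (simp add: C_cancel2)
next
  case (Cons l u)
  interpret E: evalctx K chif "{..<n}" by (rule ev)
  obtain x b where l: "l = (x, b)" by (cases l)
  have x: "x < n" "u \<in> words {..<n}" using Cons l by auto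
  have n0: "int n > 0" using n_pos by simp
  have cx: "chif (nat ((int x + k) mod int n)) = C k \<otimes> chi (int x) \<otimes> C (- k)"
  proof -
    have "chif (nat ((int x + k) mod int n)) = chi ((int x + k) mod int n)"
      using n0 by (simp add: chif_def)
    also have "\<dots> = chi (int x + k)" by (rule chi_mod)
    also have "\<dots> = C k \<otimes> chi (int x) \<otimes> C (- k)" by (simp add: chi_conj)
    finally show ?thesis .
  qed
  have E: "evalw K chif u \<in> carrier K" using E.evalw_closed[OF x(2)] .
  have cxc: "chif x = chi (int x)" by (simp add: chif_def)
  show ?case
  proof (cases b)
    case True
    have "evalw K chif (shift n k (l # u)) = chif (nat ((int x + k) mod int n)) \<otimes> evalw K chif (shift n k u)"
      using l True by simp
    also have "\<dots> = (C k \<otimes> chi (int x) \<otimes> C (- k)) \<otimes> (C k \<otimes> evalw K chif u \<otimes> C (- k))"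
      using cx Cons.IH[OF x(2)] by simp
    also have "\<dots> = C k \<otimes> (chi (int x) \<otimes> evalw K chif u) \<otimes> C (- k)"
      using E by (simp only: conj_mult chi_closed)
    also have "\<dots> = C k \<otimes> evalw K chif (l # u) \<otimes> C (- k)" using l True cxc by simp
    finally show ?thesis .
  next
    case False
    have "evalw K chif (shift n k (l # u)) = inv (chif (nat ((int x + k) mod int n))) \<otimes> evalw K chif (shift n k u)"
      using l False by simp
    also have "\<dots> = (C k \<otimes> inv (chi (int x)) \<otimes> C (- k)) \<otimes> (C k \<otimes> evalw K chif u \<otimes> C (- k))"
      using cx Cons.IH[OF x(2)] by (simp add: conj_inv)
    also have "\<dots> = C k \<otimes> (inv (chi (int x)) \<otimes> evalw K chif u) \<otimes> C (- k)"
      using E by (simp only: conj_mult chi_closed inv_closed)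
    also have "\<dots> = C k \<otimes> evalw K chif (l # u) \<otimes> C (- k)" using l False cxc by simp
    finally show ?thesis .
  qed
qed

lemma evalw_xg: "evalw K chif (xg n i) = chi i"
proof -
  have n0: "int n > 0" using n_pos by simp
  have "evalw K chif (xg n i) = chi (i mod int n)"
    using n0 by (simp add: xg_def gen_def chif_def)
  then show ?thesis by (simp add: chi_mod)
qed

lemma evalw_cor: "evalw K chif (cor_w n ps) =
   gprod K (\<lambda>i. chi (pext ps i + int i)) [0..<length ps + 1]
   \<otimes> inv (gprod K (\<lambda>i. chi (pext ps i + int i + 1)) [0..<length ps])"
proof -
  interpret E: evalctx K chif "{..<n}" by (rule ev)
  have n0: "n > 0" using n_pos by simp
  have w1: "concat (map (\<lambda>i. xg n (pext ps i + int i)) [0..<length ps + 1]) \<in> words {..<n}"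
    using xg_words[OF n0] by (auto simp: words_def)
  have w2: "concat (map (\<lambda>i. xg n (pext ps i + int i + 1)) [0..<length ps]) \<in> words {..<n}"
    using xg_words[OF n0] by (auto simp: words_def)
  show ?thesis unfolding cor_w_def using w1 w2 xg_words[OF n0]
    by (simp add: E.evalw_append E.evalw_winv E.evalw_concat evalw_xg del: upt_Suc)
qed

end

locale acgU = acgn +
  assumes Urel: "c \<otimes> U ps = U ps \<otimes> a"
begin

lemma evalw_cor_1: "evalw K chif (cor_w n ps) = \<one>"
  using Urel unfolding star evalw_cor by simp

lemma evalw_cor_shift: "evalw K chif (shift n k (cor_w n ps)) = \<one>"
  using n_pos by (simp add: evalw_shift cor_w_words evalw_cor_1 C_cancel2)

lemma T_r_a: "T (length ps) = a"
  by (simp add: T_r inv_solve_left' Urel m_assoc)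

end




lemma words_UNIV[simp]: "w \<in> words UNIV" by (simp add: words_def)

lemma pcl_evalw: "w \<in> words X \<Longrightarrow> evalw (pres_group X R) (\<lambda>x. pcl X R (gen x)) w = pcl X R w"
proof (induction w)
  case Nil then show ?case by (simp add: pcl_one)
next
  case (Cons l w)
  obtain x b where l: "l = (x, b)" by (cases l)
  then have x: "x \<in> X" "w \<in> words X" using Cons by auto
  have "pcl X R (l # w) = pcl X R [(x, b)] \<otimes>\<^bsub>pres_group X R\<^esub> pcl X R w"
    using x l by (simp add: pcl_mult)
  moreover have "pcl X R [(x, b)] = (if b then pcl X R (gen x) else inv\<^bsub>pres_group X R\<^esub> (pcl X R (gen x)))"
    using x by (auto simp: pcl_inv gen_def winv_def)
  ultimately show ?case using Cons x l by simp
qed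

lemma pcl_relator: "r \<in> R \<Longrightarrow> r \<in> words X \<Longrightarrow> pcl X R r = \<one>\<^bsub>pres_group X R\<^esub>"
  by (simp add: pcl_one pcl_eqI pres_rel_relator)

context acg
begin

definition acf :: "gac \<Rightarrow> 'a" where "acf x = (case x of GA \<Rightarrow> a | GC \<Rightarrow> c)"

lemma acf_ev: "evalctx K acf UNIV"
  by unfold_locales (simp add: acf_def split: gac.split)

lemma evalw_AC_U: "evalw K acf (AC_U ps) = U ps"
proof -
  interpret E: evalctx K acf UNIV by (rule acf_ev)
  show ?thesis unfolding AC_U_def U_def
    by (simp add: E.evalw_concat E.evalw_append E.evalw_genpow acf_def C_def)
qed

lemma AC_rels_iff: "(\<forall>r\<in>AC_rels n ps. evalw K acf r = \<one>) \<longleftrightarrow>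
   (c \<otimes> U ps = U ps \<otimes> a \<and> a \<otimes> C (int n) = C (int n) \<otimes> a)"
proof -
  interpret E: evalctx K acf UNIV by (rule acf_ev)
  have r1: "evalw K acf (winv (AC_U ps) @ gen GC @ AC_U ps @ winv (gen GA)) = inv (U ps) \<otimes> (c \<otimes> (U ps \<otimes> inv a))"
    by (simp add: E.evalw_append E.evalw_winv evalw_AC_U acf_def)
  have r2: "evalw K acf (winv (gen GA) @ genpow GC (- int n) @ gen GA @ genpow GC (int n)) = inv a \<otimes> (C (- int n) \<otimes> (a \<otimes> C (int n)))"
    by (simp add: E.evalw_append E.evalw_winv E.evalw_genpow acf_def C_def)
  have i1: "inv (U ps) \<otimes> (c \<otimes> (U ps \<otimes> inv a)) = \<one> \<longleftrightarrow> c \<otimes> U ps = U ps \<otimes> a"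
  proof -
    have "inv (U ps) \<otimes> (c \<otimes> (U ps \<otimes> inv a)) = \<one> \<longleftrightarrow> c \<otimes> (U ps \<otimes> inv a) = U ps"
      by (simp add: inv_solve_left' eq_commute[of _ "U ps"] )
    also have "\<dots> \<longleftrightarrow> c \<otimes> U ps = U ps \<otimes> a"
      by (simp add: m_assoc[symmetric] inv_solve_right')
    finally show ?thesis .
  qed
  have i2: "inv a \<otimes> (C (- int n) \<otimes> (a \<otimes> C (int n))) = \<one> \<longleftrightarrow> a \<otimes> C (int n) = C (int n) \<otimes> a"
  proof -
    have "inv a \<otimes> (C (- int n) \<otimes> (a \<otimes> C (int n))) = \<one> \<longleftrightarrow> C (- int n) \<otimes> (a \<otimes> C (int n)) = a"
      by (simp add: inv_solve_left')
    also have "\<dots> \<longleftrightarrow> a \<otimes> C (int n) = C (int n) \<otimes> a"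
      by (metis C_cancel a_closed C_closed m_closed C_cancel' )
    finally show ?thesis .
  qed
  show ?thesis unfolding AC_rels_def using r1 r2 i1 i2 by auto
qed


end


context acgU
begin

definition fL :: "nat + nat \<Rightarrow> 'a" where
  "fL x = (case x of Inl i \<Rightarrow> Aimg i | Inr j \<Rightarrow> T j)"

lemma fL_ev: "evalctx K fL X"
  by unfold_locales (simp add: fL_def split: sum.split)

lemma evalw_LOG_a: "evalw K fL (LOG_a n i) = Aimg i"
  if "1 \<le> i" "i \<le> n + 1"
  using that by (simp add: LOG_a_def gen_def fL_def Aimg_n1[simplified] Aimg_1[simplified])

lemma evalw_LOG_t: "j \<le> length ps \<Longrightarrow> evalw K fL (LOG_t ps j) = T j"
  by (auto simp: LOG_t_def gen_def fL_def T_r_a Aimg_1[simplified])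

lemma LOG_rels_hold: "r \<in> LOG_rels n ps \<Longrightarrow> evalw K fL r = \<one>"
proof -
  interpret E: evalctx K fL UNIV by (rule fL_ev)
  assume "r \<in> LOG_rels n ps"
  then consider (A) i where "1 \<le> i" "i \<le> n" "r = releq (LOG_a n (i + 1)) (winv (LOG_t ps 0) @ LOG_a n i @ LOG_t ps 0)"
    | (B) j where "j < length ps" "r = releq (LOG_t ps (j + 1)) (winv (LOG_a n (n - ps ! j)) @ LOG_t ps j @ LOG_a n (n - ps ! j))"
    unfolding LOG_rels_def by blast
  then show ?thesis
  proof cases
    case (A i)
    have "evalw K fL r = Aimg (Suc i) \<otimes> inv (inv c \<otimes> Aimg i \<otimes> c)"
      using A by (simp add: releq_def E.evalw_append E.evalw_winv evalw_LOG_a evalw_LOG_t T_0 m_assoc inv_mult_group)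
    then show ?thesis by (simp add: Aimg_Suc)
  next
    case (B j)
    have p: "ps ! j \<le> n - 1" using B pbound by auto
    then have i1: "1 \<le> n - ps ! j" "n - ps ! j \<le> n + 1" using n_pos by auto
    have "evalw K fL r = T (Suc j) \<otimes> inv (inv (Aimg (n - ps ! j)) \<otimes> T j \<otimes> Aimg (n - ps ! j))"
      using B i1 by (simp add: releq_def E.evalw_append E.evalw_winv evalw_LOG_a evalw_LOG_t m_assoc inv_mult_group)
    then show ?thesis by (simp add: T_Suc)
  qed
qed

end

lemma acgn_hom_transfer:
  assumes K1: "acgn K a c n ps" and K2: "acgn K' a' c' n ps" and h: "h \<in> hom K K'"
    and ha: "h a = a'" and hc: "h c = c'"
  shows "h (acg.C K c k) = acg.C K' c' k"
    and "h (acg.chi K a c k) = acg.chi K' a' c' k"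
    and "h (acg.Aimg K a c i) = acg.Aimg K' a' c' i"
    and "h (acgn.H K a c n ps j) = acgn.H K' a' c' n ps j"
    and "h (acgn.T K a c n ps j) = acgn.T K' a' c' n ps j"
proof -
  interpret A1: acgn K a c n ps by (rule K1)
  interpret A2: acgn K' a' c' n ps by (rule K2)
  interpret hh: group_hom K K' h using h by (simp add: group_hom_def group_hom_axioms_def A1.group_axioms A2.group_axioms)
  show C: "h (A1.C k) = A2.C k" for k by (simp add: A1.C_def A2.C_def hc hh.hom_int_pow)
  show "h (A1.chi k) = A2.chi k" by (simp add: A1.chi_def A2.chi_def C ha)
  show Ai: "h (A1.Aimg i) = A2.Aimg i" for i by (simp add: A1.Aimg_def A2.Aimg_def C ha)
  show H: "h (A1.H j) = A2.H j" for j
    unfolding A1.H_def A2.H_def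
    by (subst gprod_hom[OF A1.group_axioms A2.group_axioms h]) (simp_all add: Ai)
  show "h (A1.T j) = A2.T j" by (simp add: A1.T_def A2.T_def H hc)
qed




lemma hom_eq_on_gens':
  assumes "G = pres_group X R" "group H" "h1 \<in> hom G H" "h2 \<in> hom G H"
    "\<And>x. x \<in> X \<Longrightarrow> h1 (pcl X R (gen x)) = h2 (pcl X R (gen x))" "A \<in> carrier G"
  shows "h1 A = h2 A"
  using hom_eq_on_gens[of H h1 X R h2 A] assms by simp

lemma group_hom_intro: "group G \<Longrightarrow> group H \<Longrightarrow> h \<in> hom G H \<Longrightarrow> group_hom G H h"
  by (simp add: group_hom_def group_hom_axioms_def)

lemma compose_hom_eq:
  assumes "group G" "h1 \<in> hom G H" "h2 \<in> hom H G"
  shows "compose (carrier G) h2 h1 \<in> hom G G"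
  using assms by (simp add: group.hom_compose)

lemma AC_acgU:
  assumes n1: "n \<ge> 1" and pb: "\<forall>p\<in>set ps. p \<le> n - 1"
  shows "acgU (AC_group n ps) (pcl UNIV (AC_rels n ps) (gen GA)) (pcl UNIV (AC_rels n ps) (gen GC)) n ps"
proof -
  let ?R = "AC_rels n ps"
  let ?G = "AC_group n ps"
  have acg: "acg ?G (pcl UNIV ?R (gen GA)) (pcl UNIV ?R (gen GC))"
    by (simp add: acg_def acg_axioms_def AC_group_def pres_group_group pcl_carrier)
  interpret A: acg ?G "pcl UNIV ?R (gen GA)" "pcl UNIV ?R (gen GC)" by (rule acg)
  have f: "A.acf = (\<lambda>x. pcl UNIV ?R (gen x))"
    by (rule ext) (simp add: A.acf_def split: gac.split)
  have "\<forall>r\<in>?R. evalw ?G A.acf r = \<one>\<^bsub>?G\<^esub>"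
    unfolding f AC_group_def by (simp add: pcl_evalw pcl_relator)
  then have h: "pcl UNIV ?R (gen GC) \<otimes>\<^bsub>?G\<^esub> A.U ps = A.U ps \<otimes>\<^bsub>?G\<^esub> pcl UNIV ?R (gen GA)"
     "pcl UNIV ?R (gen GA) \<otimes>\<^bsub>?G\<^esub> A.C (int n) = A.C (int n) \<otimes>\<^bsub>?G\<^esub> pcl UNIV ?R (gen GA)"
    using A.AC_rels_iff by auto
  show ?thesis
    by (intro acgU.intro acgn.intro acg acgn_axioms.intro acgU_axioms.intro) (use h n1 pb in auto)
qed


lemma LOG_words_a: "1 \<le> i \<Longrightarrow> i \<le> n + 1 \<Longrightarrow> n \<ge> 1 \<Longrightarrow> LOG_a n i \<in> words (LOG_gens n ps)"
  by (auto simp: LOG_a_def LOG_gens_def)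
lemma LOG_words_t: "j \<le> length ps \<Longrightarrow> n \<ge> 1 \<Longrightarrow> LOG_t ps j \<in> words (LOG_gens n ps)"
  by (auto simp: LOG_t_def LOG_gens_def)
lemma LOG_rels_words: "n \<ge> 1 \<Longrightarrow> \<forall>p\<in>set ps. p \<le> n - 1 \<Longrightarrow> r \<in> LOG_rels n ps \<Longrightarrow> r \<in> words (LOG_gens n ps)"
proof -
  assume n1: "n \<ge> 1" and pb: "\<forall>p\<in>set ps. p \<le> n - 1" and r: "r \<in> LOG_rels n ps"
  have pj: "j < length ps \<Longrightarrow> 1 \<le> n - ps ! j \<and> n - ps ! j \<le> n + 1" for j
    using pb n1 by (auto dest!: nth_mem)
  show ?thesis using r n1 unfolding LOG_rels_def releq_def
    by (auto simp: LOG_words_a LOG_words_t pj simp del: One_nat_def)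
qed

lemma LOG_acgU:
  assumes n1: "n \<ge> 1" and r1: "length ps \<ge> 1" and pb: "\<forall>p\<in>set ps. p \<le> n - 1"
  shows "acgU (LOG_group n ps) (pcl (LOG_gens n ps) (LOG_rels n ps) (gen (Inl (Suc 0))))
            (pcl (LOG_gens n ps) (LOG_rels n ps) (gen (Inr 0))) n ps
     \<and> (\<forall>i. 1 \<le> i \<and> i \<le> n + 1 \<longrightarrow> pcl (LOG_gens n ps) (LOG_rels n ps) (LOG_a n i)
             = acg.Aimg (LOG_group n ps) (pcl (LOG_gens n ps) (LOG_rels n ps) (gen (Inl (Suc 0))))
            (pcl (LOG_gens n ps) (LOG_rels n ps) (gen (Inr 0))) i)
     \<and> (\<forall>j. j \<le> length ps \<longrightarrow> pcl (LOG_gens n ps) (LOG_rels n ps) (LOG_t ps j)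
             = acgn.T (LOG_group n ps) (pcl (LOG_gens n ps) (LOG_rels n ps) (gen (Inl (Suc 0))))
            (pcl (LOG_gens n ps) (LOG_rels n ps) (gen (Inr 0))) n ps j)"
proof -
  let ?X = "LOG_gens n ps"
  let ?R = "LOG_rels n ps"
  let ?G = "LOG_group n ps"
  let ?p = "pcl ?X ?R"
  have G: "?G = pres_group ?X ?R" by (simp add: LOG_group_def)
  have inX: "Inl (Suc 0) \<in> ?X" "Inr 0 \<in> ?X" using n1 r1 by (auto simp: LOG_gens_def)
  have acg: "acg ?G (?p (gen (Inl (Suc 0)))) (?p (gen (Inr 0)))"
    using inX by (simp add: acg_def acg_axioms_def G pres_group_group pcl_carrier)
  interpret L: acg ?G "?p (gen (Inl (Suc 0)))" "?p (gen (Inr 0))" by (rule acg)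
  have mult: "u \<in> words ?X \<Longrightarrow> v \<in> words ?X \<Longrightarrow> ?p (u @ v) = ?p u \<otimes>\<^bsub>?G\<^esub> ?p v" for u v
    by (simp add: G pcl_mult)
  have pinv: "u \<in> words ?X \<Longrightarrow> ?p (winv u) = inv\<^bsub>?G\<^esub> (?p u)" for u
    by (simp add: G pcl_inv)
  have cl: "u \<in> words ?X \<Longrightarrow> ?p u \<in> carrier ?G" for u by (simp add: G pcl_carrier)
  have rel: "?p l = ?p rr" if "releq l rr \<in> ?R" "l \<in> words ?X" "rr \<in> words ?X" for l rr
  proof -
    have "?p (releq l rr) = \<one>\<^bsub>?G\<^esub>" using that by (simp add: G pcl_relator releq_def)
    then have "?p l \<otimes>\<^bsub>?G\<^esub> inv\<^bsub>?G\<^esub> (?p rr) = \<one>\<^bsub>?G\<^esub>"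
      using that by (simp add: releq_def mult pinv)
    then show ?thesis using that cl by (simp add: L.inv_solve_right')
  qed
  have t0: "LOG_t ps 0 = gen (Inr 0)" using r1 by (cases ps) (auto simp: LOG_t_def)
  have L1: "?p (LOG_a n (i + 1)) = inv\<^bsub>?G\<^esub> (L.C 1) \<otimes>\<^bsub>?G\<^esub> ?p (LOG_a n i) \<otimes>\<^bsub>?G\<^esub> L.C 1"
    if "1 \<le> i" "i \<le> n" for i
  proof -
    have "releq (LOG_a n (i + 1)) (winv (LOG_t ps 0) @ LOG_a n i @ LOG_t ps 0) \<in> ?R"
      using that unfolding LOG_rels_def by blast
    then have "?p (LOG_a n (i + 1)) = ?p (winv (LOG_t ps 0) @ LOG_a n i @ LOG_t ps 0)"
      using that inX by (intro rel) (simp_all add: LOG_words_a LOG_words_t n1 t0 del: One_nat_def)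
    also have "\<dots> = inv\<^bsub>?G\<^esub> (L.C 1) \<otimes>\<^bsub>?G\<^esub> ?p (LOG_a n i) \<otimes>\<^bsub>?G\<^esub> L.C 1"
      using that inX n1 by (simp add: mult pinv t0 LOG_words_a L.C_1 L.m_assoc cl del: One_nat_def)
    finally show ?thesis .
  qed
  have L2: "1 \<le> i \<Longrightarrow> i \<le> n + 1 \<Longrightarrow> ?p (LOG_a n i) = L.Aimg i" for i
  proof (induction i)
    case 0 then show ?case by simp
  next
    case (Suc i)
    show ?case
    proof (cases "i = 0")
      case True
      then show ?thesis using n1 by (simp add: LOG_a_def L.Aimg_1[simplified])
    next
      case False
      then have "?p (LOG_a n (Suc i)) = inv\<^bsub>?G\<^esub> (L.C 1) \<otimes>\<^bsub>?G\<^esub> L.Aimg i \<otimes>\<^bsub>?G\<^esub> L.C 1"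
        using Suc L1[of i] by simp
      then show ?thesis using L.Aimg_Suc[of i] by (simp add: L.C_1)
    qed
  qed
  have comm: "?p (gen (Inl (Suc 0))) \<otimes>\<^bsub>?G\<^esub> L.C (int n) = L.C (int n) \<otimes>\<^bsub>?G\<^esub> ?p (gen (Inl (Suc 0)))"
  proof -
    have "?p (gen (Inl (Suc 0))) = L.C (- int n) \<otimes>\<^bsub>?G\<^esub> ?p (gen (Inl (Suc 0))) \<otimes>\<^bsub>?G\<^esub> L.C (int n)"
      using L2[of "n + 1"] n1 by (simp add: LOG_a_def L.Aimg_def)
    then have e: "?p (gen (Inl (Suc 0))) = L.C (- int n) \<otimes>\<^bsub>?G\<^esub> (?p (gen (Inl (Suc 0))) \<otimes>\<^bsub>?G\<^esub> L.C (int n))"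
      using inX by (simp add: L.m_assoc cl)
    have "L.C (int n) \<otimes>\<^bsub>?G\<^esub> ?p (gen (Inl (Suc 0))) = L.C (int n) \<otimes>\<^bsub>?G\<^esub> (L.C (- int n) \<otimes>\<^bsub>?G\<^esub> (?p (gen (Inl (Suc 0))) \<otimes>\<^bsub>?G\<^esub> L.C (int n)))"
      using e by (rule arg_cong)
    also have "\<dots> = ?p (gen (Inl (Suc 0))) \<otimes>\<^bsub>?G\<^esub> L.C (int n)"
      using inX by (simp add: L.C_cancel cl)
    finally show ?thesis by simp
  qed
  interpret L: acgn ?G "?p (gen (Inl (Suc 0)))" "?p (gen (Inr 0))" n ps
    by (intro acgn.intro acg acgn_axioms.intro) (use comm pb n1 in auto)
  have pj: "j < length ps \<Longrightarrow> 1 \<le> n - ps ! j \<and> n - ps ! j \<le> n + 1" for j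
    using pb n1 by (auto dest!: nth_mem)
  have L4: "j \<le> length ps \<Longrightarrow> ?p (LOG_t ps j) = L.T j" for j
  proof (induction j)
    case 0 then show ?case using t0 by (simp add: L.T_0)
  next
    case (Suc j)
    then have j: "j < length ps" by simp
    have "releq (LOG_t ps (j + 1)) (winv (LOG_a n (n - ps ! j)) @ LOG_t ps j @ LOG_a n (n - ps ! j)) \<in> ?R"
      using j unfolding LOG_rels_def by blast
    then have "?p (LOG_t ps (Suc j)) = ?p (winv (LOG_a n (n - ps ! j)) @ LOG_t ps j @ LOG_a n (n - ps ! j))"
      using j pj[OF j] n1 by (intro rel) (simp_all add: LOG_words_a LOG_words_t)
    also have "\<dots> = inv\<^bsub>?G\<^esub> (L.Aimg (n - ps ! j)) \<otimes>\<^bsub>?G\<^esub> L.T j \<otimes>\<^bsub>?G\<^esub> L.Aimg (n - ps ! j)"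
      using j pj[OF j] n1 Suc by (simp add: mult pinv LOG_words_a LOG_words_t L2 L.m_assoc)
    finally show ?case by (simp add: L.T_Suc)
  qed
  have Urel: "?p (gen (Inr 0)) \<otimes>\<^bsub>?G\<^esub> L.U ps = L.U ps \<otimes>\<^bsub>?G\<^esub> ?p (gen (Inl (Suc 0)))"
  proof -
    have "?p (gen (Inl (Suc 0))) = L.T (length ps)" using L4[of "length ps"] by (simp add: LOG_t_def)
    then have "?p (gen (Inl (Suc 0))) = inv\<^bsub>?G\<^esub> (L.U ps) \<otimes>\<^bsub>?G\<^esub> ?p (gen (Inr 0)) \<otimes>\<^bsub>?G\<^esub> L.U ps"
      by (simp add: L.T_r)
    then show ?thesis by (simp add: L.m_assoc L.inv_solve_left)
  qed
  have "acgU ?G (?p (gen (Inl (Suc 0)))) (?p (gen (Inr 0))) n ps"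
    by (intro acgU.intro acgU_axioms.intro) (use Urel in \<open>simp_all add: L.acgn_axioms\<close>)
  then show ?thesis using L2 L4 by blast
qed


lemma LOG_AC_iso:
  assumes n1: "n \<ge> 1" and r1: "length ps \<ge> 1" and pb: "\<forall>p\<in>set ps. p \<le> n - 1"
  shows "LOG_group n ps \<cong> AC_group n ps"
proof -
  let ?X = "LOG_gens n ps"
  let ?R = "LOG_rels n ps"
  let ?G = "LOG_group n ps"
  let ?p = "pcl ?X ?R"
  let ?AR = "AC_rels n ps"
  let ?AG = "AC_group n ps"
  let ?q = "pcl UNIV ?AR"
  have G: "?G = pres_group ?X ?R" by (simp add: LOG_group_def)
  have AG: "?AG = pres_group UNIV ?AR" by (simp add: AC_group_def)
  note LA = LOG_acgU[OF n1 r1 pb]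
  interpret A: acgU ?AG "?q (gen GA)" "?q (gen GC)" n ps by (rule AC_acgU[OF n1 pb])
  interpret L: acgU ?G "?p (gen (Inl (Suc 0)))" "?p (gen (Inr 0))" n ps using LA by blast
  have L2: "1 \<le> i \<Longrightarrow> i \<le> n + 1 \<Longrightarrow> ?p (LOG_a n i) = L.Aimg i" for i using LA by blast
  have L4: "j \<le> length ps \<Longrightarrow> ?p (LOG_t ps j) = L.T j" for j using LA by blast
  interpret E1: evalctx ?AG A.fL ?X by (rule A.fL_ev)
  interpret E2: evalctx ?G L.acf UNIV by (rule L.acf_ev)
  have R1: "\<And>r. r \<in> ?R \<Longrightarrow> r \<in> words ?X \<Longrightarrow> evalw ?AG A.fL r = \<one>\<^bsub>?AG\<^esub>"
    by (simp add: A.LOG_rels_hold)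
  have R2: "\<And>r. r \<in> ?AR \<Longrightarrow> r \<in> words UNIV \<Longrightarrow> evalw ?G L.acf r = \<one>\<^bsub>?G\<^esub>"
    using L.AC_rels_iff L.Urel L.comm by blast
  have h1: "E1.lift ?R \<in> hom ?G ?AG" unfolding G by (rule E1.lift_hom[OF R1])
  have h2: "E2.lift ?AR \<in> hom ?AG ?G" unfolding AG by (rule E2.lift_hom[OF R2])
  have inX: "Inl (Suc 0) \<in> ?X" "Inr 0 \<in> ?X" using n1 r1 by (auto simp: LOG_gens_def)
  have e2a: "E2.lift ?AR (?q (gen GA)) = ?p (gen (Inl (Suc 0)))"
    using E2.lift_pcl[OF R2, where w="gen GA"] by (simp add: L.acf_def)
  have e2c: "E2.lift ?AR (?q (gen GC)) = ?p (gen (Inr 0))"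
    using E2.lift_pcl[OF R2, where w="gen GC"] by (simp add: L.acf_def)
  have e1: "x \<in> ?X \<Longrightarrow> E1.lift ?R (?p (gen x)) = A.fL x" for x
    using E1.lift_pcl[OF R1, where w="gen x"] by simp
  have A1: "acgn ?AG (?q (gen GA)) (?q (gen GC)) n ps" by (rule A.acgn_axioms)
  have L1: "acgn ?G (?p (gen (Inl (Suc 0)))) (?p (gen (Inr 0))) n ps" by (rule L.acgn_axioms)
  note tr = acgn_hom_transfer[OF A1 L1 h2 e2a e2c]
  have grpG: "group ?G" unfolding G by (rule pres_group_group)
  have grpA: "group ?AG" unfolding AG by (rule pres_group_group)
  have comp1: "compose (carrier ?G) (E2.lift ?AR) (E1.lift ?R) \<in> hom ?G ?G"
    using group.hom_compose[OF grpG h1 h2] .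
  have idG: "(\<lambda>x. x) \<in> hom ?G ?G" by (simp add: hom_def)
  have left: "x \<in> carrier ?G \<Longrightarrow> E2.lift ?AR (E1.lift ?R x) = x" for x
  proof -
    assume x: "x \<in> carrier ?G"
    have "compose (carrier ?G) (E2.lift ?AR) (E1.lift ?R) x = (\<lambda>x. x) x"
    proof (rule hom_eq_on_gens'[OF G grpG comp1 idG])
      fix y assume y: "y \<in> ?X"
      have cy: "?p (gen y) \<in> carrier ?G" using y by (simp add: G pcl_carrier)
      show "compose (carrier ?G) (E2.lift ?AR) (E1.lift ?R) (?p (gen y)) = ?p (gen y)"
      proof (cases y)
        case (Inl i)
        then have i: "1 \<le> i" "i \<le> n" using y by (auto simp: LOG_gens_def)
        have "E2.lift ?AR (E1.lift ?R (?p (gen y))) = L.Aimg i"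
          using e1[OF y] Inl tr(3) by (simp add: A.fL_def)
        also have "\<dots> = ?p (gen y)" using L2[of i] i Inl by (simp add: LOG_a_def)
        finally show ?thesis using cy by (simp add: compose_def)
      next
        case (Inr j)
        then have j: "j < length ps" using y by (auto simp: LOG_gens_def)
        have "E2.lift ?AR (E1.lift ?R (?p (gen y))) = L.T j"
          using e1[OF y] Inr tr(5) by (simp add: A.fL_def)
        also have "\<dots> = ?p (gen y)" using L4[of j] j Inr by (simp add: LOG_t_def)
        finally show ?thesis using cy by (simp add: compose_def)
      qed
    qed (use x in simp)
    then show ?thesis using x by (simp add: compose_def)
  qed
  have comp2: "compose (carrier ?AG) (E1.lift ?R) (E2.lift ?AR) \<in> hom ?AG ?AG"
    using group.hom_compose[OF grpA h2 h1] .
  have idA: "(\<lambda>x. x) \<in> hom ?AG ?AG" by (simp add: hom_def)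
  have right: "y \<in> carrier ?AG \<Longrightarrow> E1.lift ?R (E2.lift ?AR y) = y" for y
  proof -
    assume y: "y \<in> carrier ?AG"
    have "compose (carrier ?AG) (E1.lift ?R) (E2.lift ?AR) y = (\<lambda>x. x) y"
    proof (rule hom_eq_on_gens'[OF AG grpA comp2 idA])
      fix x :: gac
      have cx: "?q (gen x) \<in> carrier ?AG" by (simp add: AG pcl_carrier)
      show "compose (carrier ?AG) (E1.lift ?R) (E2.lift ?AR) (?q (gen x)) = ?q (gen x)"
      proof (cases x)
        case GA
        have "E1.lift ?R (E2.lift ?AR (?q (gen x))) = A.Aimg 1"
          using GA e2a e1[OF inX(1)] by (simp add: A.fL_def)
        then show ?thesis using GA cx A.Aimg_1 by (simp add: compose_def)
      next
        case GC
        have "E1.lift ?R (E2.lift ?AR (?q (gen x))) = A.T 0"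
          using GC e2c e1[OF inX(2)] by (simp add: A.fL_def)
        then show ?thesis using GC cx by (simp add: compose_def A.T_0)
      qed
    qed (use y in simp)
    then show ?thesis using y by (simp add: compose_def)
  qed
  show ?thesis by (rule iso_by_inverse[OF h1 h2 left right])
qed




locale cycctx =
  fixes n :: nat and w :: "nat word"
  assumes npos: "0 < n"
begin

abbreviation "CR \<equiv> cyc_rels n w"
abbreviation "pc \<equiv> pcl {..<n} (cyc_rels n w)"
abbreviation "Gc \<equiv> cyc_group n w"
abbreviation "Hn \<equiv> cyc_hnn n w"

lemma Gc_def': "Gc = pres_group {..<n} CR" by (simp add: cyc_group_def)

lemma shift_rel: "(u, v) \<in> pres_rel {..<n} CR \<Longrightarrow> (shift n k u, shift n k v) \<in> pres_rel {..<n} CR"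
proof (induction rule: pres_rel.induct)
  case (prefl u) then show ?case using npos by (simp add: pres_rel.prefl shift_words)
next
  case (psym u v) then show ?case by (blast intro: pres_rel.psym)
next
  case (ptrans u v w') then show ?case by (blast intro: pres_rel.ptrans)
next
  case (pfree u v x b)
  then show ?case using npos pres_rel.pfree[of "shift n k u" "{..<n}" "shift n k v" "nat ((int x + k) mod int n)" b CR]
    by (simp add: shift_words nat_less_iff)
next
  case (prel u v r)
  then obtain j where j: "j < n" "r = shift n (int j) w" by (auto simp: cyc_rels_def)
  have "shift n k r = shift n (int (nat ((k + int j) mod int n))) w"
    using j npos by (simp add: shift_shift shift_mod)
  moreover have "nat ((k + int j) mod int n) < n" using npos by (simp add: nat_less_iff)
  ultimately have "shift n k r \<in> CR" unfolding cyc_rels_def by blast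
  then show ?case using npos pres_rel.prel[of "shift n k u" "{..<n}" "shift n k v" "shift n k r" CR]
    by (simp add: shift_words)
qed

lemma phi_pc: "u \<in> words {..<n} \<Longrightarrow> cyc_phi n w k (pc u) = pc (shift n k u)"
proof -
  assume u: "u \<in> words {..<n}"
  have "\<And>u'. u' \<in> pc u \<Longrightarrow> pres_rel {..<n} CR `` {shift n k u'} = pc (shift n k u)"
    unfolding pcl_def[symmetric]
    by (metis Image_singleton_iff pcl_def pcl_eqI pres_rel.psym shift_rel)
  moreover have "u \<in> pc u" using u by (simp add: pcl_self)
  ultimately show ?thesis unfolding cyc_phi_def by auto
qed

lemma pc_carrier: "u \<in> words {..<n} \<Longrightarrow> pc u \<in> carrier Gc"
  by (simp add: Gc_def' pcl_carrier)

lemma Gc_rep: "g \<in> carrier Gc \<Longrightarrow> \<exists>u\<in>words {..<n}. g = pc u"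
  using carrier_pcl[of g "{..<n}" CR] by (simp add: Gc_def')

lemma pc_mult: "u \<in> words {..<n} \<Longrightarrow> v \<in> words {..<n} \<Longrightarrow> pc u \<otimes>\<^bsub>Gc\<^esub> pc v = pc (u @ v)"
  by (simp add: Gc_def' pcl_mult)

lemma Hn_mult: "u \<in> words {..<n} \<Longrightarrow> v \<in> words {..<n} \<Longrightarrow>
   (pc u, m) \<otimes>\<^bsub>Hn\<^esub> (pc v, k) = (pc (u @ shift n m v), m + k)"
  using npos by (simp add: cyc_hnn_def phi_pc pc_mult shift_words)

lemma Hn_one: "\<one>\<^bsub>Hn\<^esub> = (pc [], 0)"
  by (simp add: cyc_hnn_def Gc_def' pcl_one)

lemma Hn_carrier: "carrier Hn = carrier Gc \<times> UNIV" by (simp add: cyc_hnn_def)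

lemma Hn_rep: "x \<in> carrier Hn \<Longrightarrow> \<exists>u\<in>words {..<n}. \<exists>m. x = (pc u, m)"
  using Gc_rep by (auto simp: Hn_carrier)

lemma Hn_group: "group Hn"
proof (rule groupI)
  fix x y z assume x: "x \<in> carrier Hn" and y: "y \<in> carrier Hn" and z: "z \<in> carrier Hn"
  obtain u m v k t j where u: "u \<in> words {..<n}" "x = (pc u, m)" and v: "v \<in> words {..<n}" "y = (pc v, k)"
    and t: "t \<in> words {..<n}" "z = (pc t, j)"
    using Hn_rep x y z by metis
  show "x \<otimes>\<^bsub>Hn\<^esub> y \<in> carrier Hn" using u v npos by (simp add: Hn_mult Hn_carrier pc_carrier shift_words)
  show "x \<otimes>\<^bsub>Hn\<^esub> y \<otimes>\<^bsub>Hn\<^esub> z = x \<otimes>\<^bsub>Hn\<^esub> (y \<otimes>\<^bsub>Hn\<^esub> z)"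
    using u v t npos by (simp add: Hn_mult shift_words shift_shift add.commute add.assoc)
next
  show "\<one>\<^bsub>Hn\<^esub> \<in> carrier Hn" by (simp add: Hn_one Hn_carrier pc_carrier)
next
  fix x assume x: "x \<in> carrier Hn"
  obtain u m where u: "u \<in> words {..<n}" "x = (pc u, m)" using Hn_rep x by metis
  show "\<one>\<^bsub>Hn\<^esub> \<otimes>\<^bsub>Hn\<^esub> x = x" using u by (simp add: Hn_one Hn_mult shift_0)
  let ?y = "(pc (shift n (- m) (winv u)), - m)"
  have "?y \<otimes>\<^bsub>Hn\<^esub> x = (pc (winv (shift n (- m) u) @ shift n (- m) u), 0)"
    using u npos by (simp add: Hn_mult shift_words shift_winv)
  also have "\<dots> = \<one>\<^bsub>Hn\<^esub>"
    using u npos by (simp add: Hn_one pcl_eqI pres_rel_canc2 shift_words)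
  finally show "\<exists>y\<in>carrier Hn. y \<otimes>\<^bsub>Hn\<^esub> x = \<one>\<^bsub>Hn\<^esub>"
    using u npos by (intro bexI[of _ ?y]) (auto simp: Hn_carrier pc_carrier shift_words)
qed

end


context cycctx
begin

definition "ah = (pc (gen 0), 1::int)"
definition "th = (pc [], 1::int)"

lemma gen0_words: "gen 0 \<in> words {..<n}" using npos by simp

lemma acg_h: "acg Hn ah th"
  using npos by (simp add: acg_def acg_axioms_def Hn_group ah_def th_def Hn_carrier pc_carrier)

lemma Hn_C: "acg.C Hn th k = (pc [], k)"
proof -
  interpret H: acg Hn ah th by (rule acg_h)
  have nat: "th [^]\<^bsub>Hn\<^esub> (m::nat) = (pc [], int m)" for m
  proof (induction m)
    case 0 then show ?case by (simp add: Hn_one)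
  next
    case (Suc m)
    have "th [^]\<^bsub>Hn\<^esub> Suc m = (pc [], int m) \<otimes>\<^bsub>Hn\<^esub> (pc [], 1)" using Suc by (simp add: th_def)
    also have "\<dots> = (pc [], int (Suc m))" by (simp add: Hn_mult)
    finally show ?case .
  qed
  have pos: "0 \<le> k \<Longrightarrow> th [^]\<^bsub>Hn\<^esub> k = (pc [], k)" for k
    using nat[of "nat k"] by simp
  show ?thesis
  proof (cases "0 \<le> k")
    case True then show ?thesis by (simp add: H.C_def pos)
  next
    case False
    have "th [^]\<^bsub>Hn\<^esub> k = inv\<^bsub>Hn\<^esub> (th [^]\<^bsub>Hn\<^esub> (- k))"
      using H.int_pow_neg[of th "- k"] by (simp add: th_def Hn_carrier pc_carrier)
    also have "\<dots> = inv\<^bsub>Hn\<^esub> (pc [], - k)" using False pos[of "-k"] by simp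
    also have "\<dots> = (pc [], k)"
      by (rule H.inv_equality) (simp_all add: Hn_mult Hn_one Hn_carrier pc_carrier)
    finally show ?thesis by (simp add: H.C_def)
  qed
qed

lemma xg_shift: "shift n k (gen 0) = xg n k"
  by (simp add: gen_def xg_def)

lemma Hn_chi: "acg.chi Hn ah th k = (pc (xg n k), 0)"
proof -
  interpret H: acg Hn ah th by (rule acg_h)
  show ?thesis unfolding H.chi_def Hn_C
    using npos by (simp add: ah_def Hn_mult xg_shift xg_words shift_words)
qed

lemma Hn_gprod0: "(\<And>i. i \<in> set xs \<Longrightarrow> g i \<in> words {..<n}) \<Longrightarrow>
   gprod Hn (\<lambda>i. (pc (g i), 0)) xs = (pc (concat (map g xs)), 0)"
proof (induction xs)
  case Nil then show ?case by (simp add: Hn_one)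
next
  case (Cons x xs)
  have "concat (map g xs) \<in> words {..<n}" using Cons.prems by (auto simp: words_def)
  then show ?case using Cons by (simp add: Hn_mult shift_0)
qed

lemma Hn_comm: "ah \<otimes>\<^bsub>Hn\<^esub> acg.C Hn th (int n) = acg.C Hn th (int n) \<otimes>\<^bsub>Hn\<^esub> ah"
  using npos by (simp add: Hn_C ah_def Hn_mult gen0_words gen_def)

end

lemma (in group) mult_inv_one: "x \<in> carrier G \<Longrightarrow> y \<in> carrier G \<Longrightarrow> x \<otimes> inv y = \<one> \<Longrightarrow> x = y"
  using inv_solve_right'[of "\<one>" x y] by simp

lemma Hn_acgU:
  assumes n1: "n \<ge> 1" and pb: "\<forall>p\<in>set ps. p \<le> n - 1"
  shows "acgU (cyc_hnn n (cor_w n ps)) (cycctx.ah n (cor_w n ps)) (cycctx.th n (cor_w n ps)) n ps"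
proof -
  interpret Y: cycctx n "cor_w n ps" using n1 by unfold_locales simp
  interpret H: acg Y.Hn Y.ah Y.th by (rule Y.acg_h)
  have np: "0 < n" using n1 by simp
  let ?A = "concat (map (\<lambda>i. xg n (pext ps i + int i)) [0..<length ps + 1])"
  let ?B = "concat (map (\<lambda>i. xg n (pext ps i + int i + 1)) [0..<length ps])"
  have wA: "?A \<in> words {..<n}" and wB: "?B \<in> words {..<n}"
    using xg_words[OF np] by (auto simp: words_def simp del: upt_Suc)
  have s0: "shift n (int 0) (cor_w n ps) = cor_w n ps" using shift_0[OF cor_w_words[OF np]] by simp
  have "cor_w n ps \<in> Y.CR" unfolding cyc_rels_def
    by (rule CollectI, rule exI[of _ 0]) (use np s0 in simp)
  then have r1: "Y.pc (cor_w n ps) = \<one>\<^bsub>Y.Gc\<^esub>"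
    using cor_w_words[OF np] by (simp add: Y.Gc_def' pcl_relator)
  have e: "Y.pc (cor_w n ps) = Y.pc (?A @ winv ?B)" by (simp add: cor_w_def)
  also have "\<dots> = Y.pc ?A \<otimes>\<^bsub>Y.Gc\<^esub> inv\<^bsub>Y.Gc\<^esub> (Y.pc ?B)"
    using wA wB by (simp add: Y.Gc_def' pcl_mult pcl_inv)
  finally have "Y.pc ?A \<otimes>\<^bsub>Y.Gc\<^esub> inv\<^bsub>Y.Gc\<^esub> (Y.pc ?B) = \<one>\<^bsub>Y.Gc\<^esub>" using r1 by simp
  interpret Gg: group Y.Gc by (simp add: Y.Gc_def' pres_group_group)
  have AB: "Y.pc ?A = Y.pc ?B"
    by (rule Gg.mult_inv_one) (use wA wB \<open>Y.pc ?A \<otimes>\<^bsub>Y.Gc\<^esub> inv\<^bsub>Y.Gc\<^esub> (Y.pc ?B) = \<one>\<^bsub>Y.Gc\<^esub>\<close> in \<open>simp_all add: Y.pc_carrier\<close>)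
  have g1: "gprod Y.Hn (\<lambda>i. H.chi (pext ps i + int i + 1)) [0..<length ps] = (Y.pc ?B, 0)"
    unfolding Y.Hn_chi by (rule Y.Hn_gprod0) (rule xg_words[OF np])
  have g0: "gprod Y.Hn (\<lambda>i. H.chi (pext ps i + int i)) [0..<length ps + 1] = (Y.pc ?A, 0)"
    unfolding Y.Hn_chi by (rule Y.Hn_gprod0) (rule xg_words[OF np])
  have Urel: "Y.th \<otimes>\<^bsub>Y.Hn\<^esub> H.U ps = H.U ps \<otimes>\<^bsub>Y.Hn\<^esub> Y.ah"
    using H.star g0 g1 AB by simp
  have A: "acgn Y.Hn Y.ah Y.th n ps"
    by (rule acgn.intro[OF Y.acg_h acgn_axioms.intro]) (use Y.Hn_comm pb n1 in simp_all)
  show ?thesis by (rule acgU.intro[OF A acgU_axioms.intro[OF Urel]])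
qed




lemma hom_evalw:
  assumes "evalctx G f X" "group H" "h \<in> hom G H" "u \<in> words X"
  shows "h (evalw G f u) = evalw H (\<lambda>x. h (f x)) u"
proof -
  interpret E: evalctx G f X by (rule assms(1))
  interpret hh: group_hom G H h using assms(2,3) by (simp add: group_hom_def group_hom_axioms_def E.group_axioms)
  show ?thesis using assms(4)
  proof (induction u)
    case (Cons l u)
    obtain x b where l: "l = (x, b)" by (cases l)
    then have x: "x \<in> X" "u \<in> words X" using Cons by auto
    show ?case using Cons x l E.f_closed[OF x(1)] by simp
  qed simp
qed

context cycctx
begin

lemma xg_lt: "j < n \<Longrightarrow> xg n (int j) = gen j"
  by (simp add: xg_def)

lemma Hn_evalw: "u \<in> words {..<n} \<Longrightarrow> evalw Hn (\<lambda>j. (pc (xg n (int j)), 0)) u = (pc u, 0)"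
proof (induction u)
  case Nil then show ?case by (simp add: Hn_one)
next
  case (Cons l u)
  interpret H: group Hn by (rule Hn_group)
  obtain x b where l: "l = (x, b)" by (cases l)
  then have x: "x < n" "u \<in> words {..<n}" using Cons by auto
  have g: "(pc (gen x), 0::int) \<in> carrier Hn" using x by (simp add: Hn_carrier pc_carrier)
  have inv: "inv\<^bsub>Hn\<^esub> (pc (gen x), 0) = (pc [(x, False)], 0)"
  proof (rule H.inv_equality)
    show "(pc [(x, False)], 0) \<otimes>\<^bsub>Hn\<^esub> (pc (gen x), 0) = \<one>\<^bsub>Hn\<^esub>"
      using x pres_rel.pfree[of "[]" "{..<n}" "[]" x False CR]
      by (simp add: Hn_mult Hn_one shift_0 gen_def pcl_eqI)
  qed (use x in \<open>simp_all add: Hn_carrier pc_carrier\<close>)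
  show ?case
  proof (cases b)
    case True
    then show ?thesis using l x Cons.IH[OF x(2)] by (simp add: xg_lt Hn_mult shift_0 gen_def)
  next
    case False
    then show ?thesis using l x Cons.IH[OF x(2)] inv by (simp add: xg_lt Hn_mult shift_0)
  qed
qed

end

lemma AC_hnn_iso:
  assumes n1: "n \<ge> 1" and pb: "\<forall>p\<in>set ps. p \<le> n - 1"
  shows "AC_group n ps \<cong> cyc_hnn n (cor_w n ps)"
proof -
  let ?AR = "AC_rels n ps"
  let ?AG = "AC_group n ps"
  let ?q = "pcl UNIV ?AR"
  have AG: "?AG = pres_group UNIV ?AR" by (simp add: AC_group_def)
  interpret Y: cycctx n "cor_w n ps" using n1 by unfold_locales simp
  have np: "0 < n" using n1 by simp
  interpret A: acgU ?AG "?q (gen GA)" "?q (gen GC)" n ps by (rule AC_acgU[OF n1 pb])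
  interpret Hh: acgU Y.Hn Y.ah Y.th n ps by (rule Hn_acgU[OF n1 pb])
  interpret E1: evalctx Y.Hn Hh.acf UNIV by (rule Hh.acf_ev)
  have R1: "\<And>r. r \<in> ?AR \<Longrightarrow> r \<in> words UNIV \<Longrightarrow> evalw Y.Hn Hh.acf r = \<one>\<^bsub>Y.Hn\<^esub>"
    using Hh.AC_rels_iff Hh.Urel Hh.comm by blast
  have h1: "E1.lift ?AR \<in> hom ?AG Y.Hn" unfolding AG by (rule E1.lift_hom[OF R1])
  interpret E3: evalctx ?AG A.chif "{..<n}" by (rule A.ev)
  have R3: "\<And>r. r \<in> Y.CR \<Longrightarrow> r \<in> words {..<n} \<Longrightarrow> evalw ?AG A.chif r = \<one>\<^bsub>?AG\<^esub>"
    by (auto simp: cyc_rels_def A.evalw_cor_shift)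
  have h3: "E3.lift Y.CR \<in> hom Y.Gc ?AG" unfolding Y.Gc_def' by (rule E3.lift_hom[OF R3])
  have l3: "u \<in> words {..<n} \<Longrightarrow> E3.lift Y.CR (Y.pc u) = evalw ?AG A.chif u" for u
    by (rule E3.lift_pcl[OF R3])
  define Psi where "Psi = (\<lambda>p. E3.lift Y.CR (fst p) \<otimes>\<^bsub>?AG\<^esub> A.C (snd p))"
  have Psi_pc: "u \<in> words {..<n} \<Longrightarrow> Psi (Y.pc u, m) = evalw ?AG A.chif u \<otimes>\<^bsub>?AG\<^esub> A.C m" for u m
    by (simp add: Psi_def l3)
  have h2: "Psi \<in> hom Y.Hn ?AG"
  proof (rule homI)
    fix x assume "x \<in> carrier Y.Hn"
    then obtain u m where u: "u \<in> words {..<n}" "x = (Y.pc u, m)" using Y.Hn_rep by metis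
    then show "Psi x \<in> carrier ?AG" by (simp add: Psi_pc)
  next
    fix x y assume "x \<in> carrier Y.Hn" "y \<in> carrier Y.Hn"
    then obtain u m v k where u: "u \<in> words {..<n}" "x = (Y.pc u, m)" and v: "v \<in> words {..<n}" "y = (Y.pc v, k)"
      using Y.Hn_rep by metis
    have su: "shift n m v \<in> words {..<n}" using np by (simp add: shift_words)
    have "Psi (x \<otimes>\<^bsub>Y.Hn\<^esub> y) = evalw ?AG A.chif u \<otimes>\<^bsub>?AG\<^esub> (A.C m \<otimes>\<^bsub>?AG\<^esub> evalw ?AG A.chif v \<otimes>\<^bsub>?AG\<^esub> A.C (- m)) \<otimes>\<^bsub>?AG\<^esub> (A.C m \<otimes>\<^bsub>?AG\<^esub> A.C k)"
      using u v su by (simp add: Y.Hn_mult Psi_pc E3.evalw_append A.evalw_shift A.C_add)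
    also have "\<dots> = Psi x \<otimes>\<^bsub>?AG\<^esub> Psi y"
      using u v by (simp add: Psi_pc A.m_assoc A.C_cancel2)
    finally show "Psi (x \<otimes>\<^bsub>Y.Hn\<^esub> y) = Psi x \<otimes>\<^bsub>?AG\<^esub> Psi y" .
  qed
  have grpA: "group ?AG" unfolding AG by (rule pres_group_group)
  have grpH: "group Y.Hn" by (rule Y.Hn_group)
  have e1a: "E1.lift ?AR (?q (gen GA)) = Y.ah"
    using E1.lift_pcl[OF R1, where w="gen GA"] by (simp add: Hh.acf_def)
  have e1c: "E1.lift ?AR (?q (gen GC)) = Y.th"
    using E1.lift_pcl[OF R1, where w="gen GC"] by (simp add: Hh.acf_def)
  have A1: "acgn ?AG (?q (gen GA)) (?q (gen GC)) n ps" by (rule A.acgn_axioms)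
  have H1: "acgn Y.Hn Y.ah Y.th n ps" by (rule Hh.acgn_axioms)
  note tr = acgn_hom_transfer[OF A1 H1 h1 e1a e1c]
  have comp1: "compose (carrier ?AG) Psi (E1.lift ?AR) \<in> hom ?AG ?AG"
    using group.hom_compose[OF grpA h1 h2] .
  have idA: "(\<lambda>x. x) \<in> hom ?AG ?AG" by (simp add: hom_def)
  have left: "x \<in> carrier ?AG \<Longrightarrow> Psi (E1.lift ?AR x) = x" for x
  proof -
    assume x: "x \<in> carrier ?AG"
    have "compose (carrier ?AG) Psi (E1.lift ?AR) x = (\<lambda>x. x) x"
    proof (rule hom_eq_on_gens'[OF AG grpA comp1 idA])
      fix y :: gac
      have cy: "?q (gen y) \<in> carrier ?AG" by (simp add: AG pcl_carrier)
      have g0: "gen 0 \<in> words {..<n}" using np by simp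
      show "compose (carrier ?AG) Psi (E1.lift ?AR) (?q (gen y)) = ?q (gen y)"
      proof (cases y)
        case GA
        have "Psi (E1.lift ?AR (?q (gen y))) = A.chi 0 \<otimes>\<^bsub>?AG\<^esub> A.C 1"
          using GA e1a g0 by (simp add: Y.ah_def Psi_pc A.chif_def)
        also have "\<dots> = ?q (gen GA)"
          by (simp add: A.chi_def A.m_assoc A.C_cancel2)
        finally show ?thesis using GA cy by (simp add: compose_def)
      next
        case GC
        have "Psi (E1.lift ?AR (?q (gen y))) = A.C 1"
          using GC e1c by (simp add: Y.th_def Psi_pc)
        then show ?thesis using GC cy by (simp add: compose_def A.C_1)
      qed
    qed (use x in simp)
    then show ?thesis using x by (simp add: compose_def)
  qed
  have right: "y \<in> carrier Y.Hn \<Longrightarrow> E1.lift ?AR (Psi y) = y" for y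
  proof -
    assume "y \<in> carrier Y.Hn"
    then obtain u m where u: "u \<in> words {..<n}" "y = (Y.pc u, m)" using Y.Hn_rep by metis
    interpret hh: group_hom ?AG Y.Hn "E1.lift ?AR"
      using grpA grpH h1 by (simp add: group_hom_def group_hom_axioms_def)
    have ev: "E1.lift ?AR (evalw ?AG A.chif u) = evalw Y.Hn (\<lambda>j. (Y.pc (xg n (int j)), 0)) u"
      using hom_evalw[OF A.ev grpH h1 u(1)] tr(2) by (simp add: A.chif_def Y.Hn_chi)
    have "E1.lift ?AR (Psi y) = E1.lift ?AR (evalw ?AG A.chif u) \<otimes>\<^bsub>Y.Hn\<^esub> E1.lift ?AR (A.C m)"
      using u E3.evalw_closed[OF u(1)] by (simp add: Psi_pc)
    also have "\<dots> = (Y.pc u, 0) \<otimes>\<^bsub>Y.Hn\<^esub> (Y.pc [], m)"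
      using ev tr(1) u by (simp add: Y.Hn_evalw Y.Hn_C)
    also have "\<dots> = y" using u by (simp add: Y.Hn_mult shift_0)
    finally show ?thesis .
  qed
  show ?thesis by (rule iso_by_inverse[OF h1 h2 left right])
qed

theorem corollary3p2:
  fixes n :: nat and ps :: "nat list"
  assumes "n \<ge> 1" and "length ps \<ge> 1" and "\<forall>p\<in>set ps. p \<le> n - 1"
  shows "LOG_group n ps \<cong> AC_group n ps \<and> LOG_group n ps \<cong> cyc_hnn n (cor_w n ps)"
proof -
  have 1: "LOG_group n ps \<cong> AC_group n ps" by (rule LOG_AC_iso[OF assms])
  have 2: "AC_group n ps \<cong> cyc_hnn n (cor_w n ps)" by (rule AC_hnn_iso[OF assms(1,3)])
  show ?thesis using 1 iso_trans[OF 1 2] by simp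
qed



end
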